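(* For every $n\ge 1$, the number $a_n$ of topologically distinct endstates of Planted Brussels Sprouts whose initial state has $n$ arms is \[a_n=\frac{1}{2n-1}\binom{3n-3}{n-1}.\]
   Context: Planted Brussels Sprouts of order $n$: start with a closed disk with $n$ marked points on its boundary circle, labeled $1,\dots,n$ in clockwise order. Attached to each marked point is an arm, a short segment pointing into the interior of the disk; these arms are free. A move consists of two steps. First, choose two free arms and join their free ends by a simple curve (an arc) in the disk that does not intersect any previously drawn arc or arm; the two joined arms cease to be free. Second, mark a point (a notch) on the arc, from which two new free arms emanate, one on each side of the arc. The game ends when no move is possible, and the final configuration is called an endstate. Long labels: the original arm at point $i$ has long label $i$. If an arc joins arms with long labels $\alpha$ and $\beta$, the two new arms receive long labels $(\alpha,\beta)$ and $(\beta,\alpha)$, placed so that, going clockwise around the notch, one sees the old arm $\alpha$, the new arm $(\alpha,\beta)$, the old arm $\beta$, and the new arm $(\beta,\alpha)$. Two endstates are topologically equivalent (counted once) iff some homeomorphism of the disk carries one to the other preserving long labels; equivalently, iff they have the same set of long labels. *)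

theory Defs
  imports Complex_Main
begin

text \<open>Long labels: an original arm carries a point label i; an arm created by joining
arms with long labels a and b carries the long label (a,b).\<close>
datatype lbl = Pt nat | Pr lbl lbl

text \<open>Every region (face) of the disk cut by the
drawn arcs is a topological disk (everything drawn is connected to the boundary circle),
so a region is determined, for the purpose of future moves, by the cyclic sequence of the
free arms on its boundary, listed in clockwise order (boundary traversed with the region
on the right). A position is a list of regions (each a list of free arms, up to rotation)
together with the set of all long labels of arms created so far.

A move joins two distinct free arms a = R!i and b = R!j (i < j) in the same region R.
The arc splits R into the part X (arms strictly clockwise-between a and b) and the part
Y (arms strictly clockwise-between b and a). Going clockwise around the notch one sees
a, (a,b), b, (b,a); hence the new arm (a,b) lies in the X-part and (b,a) in the Y-part.\<close>

inductive pbs_reach :: "nat \<Rightarrow> lbl list list \<Rightarrow> lbl set \<Rightarrow> bool" for n :: nat where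
  init: "pbs_reach n [map Pt [1..<n+1]] (Pt ` {1..n})"
| move: "\<lbrakk> pbs_reach n rs L; R \<in> set rs; i < j; j < length R \<rbrakk> \<Longrightarrow>
          pbs_reach n
            (remove1 R rs @
              [ take (j - Suc i) (drop (Suc i) R) @ [Pr (R!i) (R!j)],
                drop (Suc j) R @ take i R @ [Pr (R!j) (R!i)] ])
            (L \<union> {Pr (R!i) (R!j), Pr (R!j) (R!i)})"

definition pbs_endstate :: "nat \<Rightarrow> lbl list list \<Rightarrow> lbl set \<Rightarrow> bool" where
  "pbs_endstate n rs L \<longleftrightarrow> pbs_reach n rs L \<and> (\<forall>R \<in> set rs. length R \<le> 1)"

text \<open>Number of topologically distinct endstates: endstates are identified iff they
have the same set of long labels.\<close>
definition pbs_count :: "nat \<Rightarrow> nat" where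
  "pbs_count n = card {L. \<exists>rs. pbs_endstate n rs L}"

end

theory Submission
  imports Defs "HOL-Computational_Algebra.Formal_Power_Series"
begin

fun tt :: "nat \<Rightarrow> nat" where
  "tt 0 = 1"
| "tt (Suc m) = (\<Sum>a=0..m. \<Sum>b=0..m-a. tt a * tt b * tt (m-a-b))"

lemma tt_pos: "tt m > 0"
proof (induction m rule: less_induct)
  case (less m)
  show ?case
  proof (cases m)
    case 0 then show ?thesis by simp
  next
    case (Suc k)
    have "tt 0 * tt 0 * tt (k - 0 - 0) > 0" using less Suc by simp
    also have "tt 0 * tt 0 * tt (k - 0 - 0) \<le> (\<Sum>b=0..k-0. tt 0 * tt b * tt (k-0-b))"
      by (rule member_le_sum) auto
    also have "\<dots> \<le> (\<Sum>a=0..k. \<Sum>b=0..k-a. tt a * tt b * tt (k-a-b))"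
      by (rule member_le_sum[where f="\<lambda>a. \<Sum>b=0..k-a. tt a * tt b * tt (k-a-b)"]) auto
    finally show ?thesis using Suc by simp
  qed
qed

definition phi :: "nat \<Rightarrow> nat \<Rightarrow> real" where
  "phi j m = (if m = 0 then 1 else real j * real ((3*m+j) choose m) / real (3*m+j))"

lemma phi_alt: "0 < j \<Longrightarrow> phi j m = real j * real ((3*m+j) choose m) / real (3*m+j)"
  by (simp add: phi_def)

lemma aux_real:
  fixes N m j C C1 :: real
  assumes N: "N = 3*m+j+3" and m: "m \<ge> 0" and j: "j \<ge> 0"
    and h2: "(m+1) * C1 = (N - m) * C"
  shows "j * C1 / N + (j+3) * C / N = (j+1) * C / (m+1)"
proof -
  have Np: "N > 0" using N m j by simp
  have mp: "m + 1 > 0" using m by simp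
  have "(m+1) * (j*C1 + (j+3)*C) = j*((m+1)*C1) + (j+3)*(m+1)*C" by (simp add: algebra_simps)
  also have "\<dots> = j*((N-m)*C) + (j+3)*(m+1)*C" using h2 by simp
  also have "\<dots> = (j+1)*N*C" unfolding N by (simp add: algebra_simps)
  finally have e: "(m+1) * (j*C1 + (j+3)*C) = (j+1)*N*C" .
  have "j * C1 / N + (j+3) * C / N = (j*C1 + (j+3)*C) / N" by (simp add: add_divide_distrib)
  also have "j*C1 + (j+3)*C = (j+1)*N*C / (m+1)" using e mp by (simp add: eq_divide_eq mult.commute)
  also have "(j+1)*N*C / (m+1) / N = (j+1) * C / (m+1)" using Np by simp
  finally show ?thesis .
qed
lemma phi_rec: "phi (Suc j) (Suc m) = phi j (Suc m) + phi (j+3) m"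
proof -
  define N where "N = 3*m+j+3"
  have h1: "real (Suc m) * real (Suc N choose Suc m) = real (Suc N) * real (N choose m)"
    by (metis Suc_times_binomial of_nat_mult)
  have h2': "Suc m * (N choose Suc m) = (N - m) * (N choose m)"
    using binomial_absorption[of m N] binomial_absorb_comp[of N m] by simp
  have NN: "real (N - m) = real N - real m" unfolding N_def by auto
  have h2: "(real m + 1) * real (N choose Suc m) = (real N - real m) * real (N choose m)"
    using h2' NN by (metis add.commute of_nat_Suc of_nat_mult)
  have L1: "phi (Suc j) (Suc m) = real (Suc j) * real (Suc N choose Suc m) / real (Suc N)"
    by (simp add: phi_def N_def)
  have e: "real (Suc N choose Suc m) / real (Suc N) = real (N choose m) / real (Suc m)"
    using h1 by (simp add: field_simps del: binomial_Suc_Suc)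
  have "phi (Suc j) (Suc m) = real (Suc j) * (real (Suc N choose Suc m) / real (Suc N))"
    using L1 by (simp del: binomial_Suc_Suc)
  also have "\<dots> = real (Suc j) * (real (N choose m) / real (Suc m))" using e by (simp only:)
  finally have L: "phi (Suc j) (Suc m) = (real j + 1) * real (N choose m) / (real m + 1)"
    by (simp add: add.commute)
  have eqN: "3 * Suc m + j = N" by (simp add: N_def)
  have "phi j (Suc m) = real j * real ((3*Suc m+j) choose Suc m) / real (3*Suc m+j)"
    unfolding phi_def by (rule if_not_P) simp
  hence R1: "phi j (Suc m) = real j * real (N choose Suc m) / real N"
    by (simp only: eqN)
  have eqN2: "3*m + (j+3) = N" by (simp add: N_def)
  have "phi (j+3) m = real (j+3) * real ((3*m+(j+3)) choose m) / real (3*m+(j+3))"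
    by (rule phi_alt) simp
  hence R2: "phi (j+3) m = (real j + 3) * real (N choose m) / real N"
    by (simp only: eqN2) simp
  show ?thesis
    using aux_real[of "real N" "real m" "real j" "real (N choose Suc m)" "real (N choose m)"] h2
    unfolding L R1 R2 by (simp add: N_def)
qed

definition TT :: "real fps" where "TT = Abs_fps (\<lambda>n. real (tt n))"

lemma TT_eq: "TT = 1 + fps_X * TT^3"
proof (rule fps_ext)
  fix n
  show "fps_nth TT n = fps_nth (1 + fps_X * TT^3) n"
  proof (cases n)
    case 0 then show ?thesis by (simp add: TT_def)
  next
    case (Suc m)
    have "fps_nth (TT^3) m = fps_nth (TT * (TT * TT)) m"
      by (simp add: power3_eq_cube mult.assoc)
    also have "\<dots> = (\<Sum>a=0..m. real (tt a) * (\<Sum>b=0..m-a. real (tt b) * real (tt (m-a-b))))"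
      by (simp add: fps_mult_nth TT_def diff_diff_add)
    also have "\<dots> = real (tt (Suc m))"
      by (simp add: sum_distrib_left mult.assoc)
    finally show ?thesis using Suc by (simp add: TT_def)
  qed
qed

lemma TT_pow_rec: "fps_nth (TT ^ Suc j) (Suc m) = fps_nth (TT ^ j) (Suc m) + fps_nth (TT ^ (j+3)) m"
proof -
  have "TT^Suc j = TT^j * TT" by (simp add: mult.commute)
  also have "\<dots> = TT^j + fps_X * TT^(j+3)"
    by (subst (2) TT_eq) (simp add: algebra_simps power_add)
  finally show ?thesis by simp
qed

lemma TT_pow: "fps_nth (TT^j) m = phi j m"
proof (induction m arbitrary: j)
  case 0
  then show ?case by (simp add: fps_power_zeroth TT_def phi_def)
next
  case (Suc m)
  note IHm = Suc.IH
  show ?case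
  proof (induction j)
    case 0 then show ?case by (simp add: phi_def)
  next
    case (Suc j)
    then show ?case using TT_pow_rec IHm phi_rec by simp
  qed
qed

lemma tt_closed: "real (tt m) = real ((3*m) choose m) / real (2*m+1)"
proof -
  have "real (tt m) = phi 1 m" using TT_pow[of 1 m] by (simp add: TT_def)
  also have "\<dots> = real ((3*m+1) choose m) / real (3*m+1)" by (simp add: phi_def)
  also have "\<dots> = real ((3*m) choose m) / real (2*m+1)"
  proof -
    have "real (Suc (3*m) - m) * real (Suc (3*m) choose m) = real (Suc (3*m)) * real ((3*m) choose m)"
      by (metis binomial_absorb_comp diff_Suc_1 of_nat_mult)
    moreover have "Suc (3*m) - m = 2*m+1" by simp
    ultimately show ?thesis by (simp add: field_simps)
  qed
  finally show ?thesis .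
qed

inductive fin :: "lbl list \<Rightarrow> lbl set \<Rightarrow> bool" where
  fin0: "length R \<le> 1 \<Longrightarrow> fin R {}"
| finm: "fin (M @ [Pr a b]) A \<Longrightarrow> fin (P' @ P @ [Pr b a]) B \<Longrightarrow>
         fin (P @ a # M @ b # P') ({Pr a b, Pr b a} \<union> A \<union> B)"

lemma fin_rot1:
  assumes "fin (u # V) C" shows "fin (V @ [u]) C"
  using assms
proof (cases rule: fin.cases)
  case (fin0) then show ?thesis by (auto intro: fin.fin0)
next
  case (finm M a b A P' P B)
  show ?thesis
  proof (cases P)
    case Nil
    with finm have u: "u = a" and V: "V = M @ b # P'" by auto
    have "fin (M @ b # P' @ a # []) ({Pr b a, Pr a b} \<union> B \<union> A)"
      using fin.finm[of P' b a B "[]" M A] finm Nil by simp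
    then show ?thesis using u V finm by (simp add: insert_commute Un_commute Un_left_commute)
  next
    case (Cons p P0)
    with finm have u: "u = p" and V: "V = P0 @ a # M @ b # P'" by auto
    have "fin (P0 @ a # M @ b # (P' @ [u])) ({Pr a b, Pr b a} \<union> A \<union> B)"
      using fin.finm[of M a b A "P' @ [u]" P0 B] finm Cons u by simp
    then show ?thesis using V finm by simp
  qed
qed

lemma fin_rot: "fin (U @ V) C \<Longrightarrow> fin (V @ U) C"
proof (induction U arbitrary: V)
  case Nil then show ?case by simp
next
  case (Cons u U)
  have "fin (u # (U @ V)) C" using Cons.prems by simp
  hence "fin ((U @ V) @ [u]) C" by (rule fin_rot1)
  hence "fin (U @ (V @ [u])) C" by simp
  hence "fin ((V @ [u]) @ U) C" by (rule Cons.IH)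
  then show ?case by simp
qed

lemma uncontract_fin:
  assumes "fin (P @ Pr b a # P') C" "fin (M @ [Pr a b]) D"
  shows "fin (P @ a # M @ b # P') ({Pr a b, Pr b a} \<union> D \<union> C)"
proof -
  have "fin (P' @ (P @ [Pr b a])) C" using fin_rot[of "P @ [Pr b a]" P' C] assms(1) by simp
  then show ?thesis using fin.finm[OF assms(2)] by simp
qed

inductive itm :: "lbl list \<Rightarrow> lbl \<Rightarrow> lbl set \<Rightarrow> bool" where
  itl: "itm [z] z {}"
| itn: "itm Qa xa Sa \<Longrightarrow> itm Qb xb Sb \<Longrightarrow> fin (Qm @ [Pr xa xb]) Sm \<Longrightarrow>
        itm (Qa @ Qm @ Qb) (Pr xb xa) ({Pr xa xb, Pr xb xa} \<union> Sa \<union> Sb \<union> Sm)"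

definition cfin :: "lbl list \<Rightarrow> lbl set \<Rightarrow> bool" where
  "cfin R A \<longleftrightarrow> (length R \<le> 1 \<and> A = {}) \<or>
     (\<exists>r0 Q1 Qx Q2 x Sx A1 A2. R = r0 # Q1 @ Qx @ Q2 \<and> itm Qx x Sx \<and>
        fin (Q1 @ [Pr r0 x]) A1 \<and> fin (Q2 @ [Pr x r0]) A2 \<and>
        A = {Pr r0 x, Pr x r0} \<union> Sx \<union> A1 \<union> A2)"

lemma cfinI:
  "R = r0 # Q1 @ Qx @ Q2 \<Longrightarrow> itm Qx x Sx \<Longrightarrow> fin (Q1 @ [Pr r0 x]) A1 \<Longrightarrow>
   fin (Q2 @ [Pr x r0]) A2 \<Longrightarrow> A = {Pr r0 x, Pr x r0} \<union> Sx \<union> A1 \<union> A2 \<Longrightarrow> cfin R A"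
  unfolding cfin_def by blast

lemma uncontract_itm:
  "itm Qx x S \<Longrightarrow> fin (P @ x # P') C \<Longrightarrow> fin (P @ Qx @ P') (S \<union> C)"
proof (induction arbitrary: P P' C rule: itm.induct)
  case (itl z) then show ?case by simp
next
  case (itn Qa xa Sa Qb xb Sb Qm Sm)
  have 1: "fin (P @ xa # Qm @ xb # P') ({Pr xa xb, Pr xb xa} \<union> Sm \<union> C)"
    using uncontract_fin[OF itn.prems itn.hyps(3)] .
  have 2: "fin (P @ Qa @ Qm @ xb # P') (Sa \<union> ({Pr xa xb, Pr xb xa} \<union> Sm \<union> C))"
    using itn.IH(1)[OF 1] .
  have h4: "fin ((P @ Qa @ Qm) @ xb # P') (Sa \<union> ({Pr xa xb, Pr xb xa} \<union> Sm \<union> C))"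
    using 2 by (simp only: append_assoc)
  have 3: "fin ((P @ Qa @ Qm) @ Qb @ P') (Sb \<union> (Sa \<union> ({Pr xa xb, Pr xb xa} \<union> Sm \<union> C)))"
    using itn.IH(2)[OF h4] .
  show ?case using 3 by (simp add: Un_ac insert_commute)
qed

lemma cfin_fin: "cfin R A \<Longrightarrow> fin R A"
proof (unfold cfin_def, elim disjE exE conjE)
  assume "length R \<le> 1" "A = {}" then show "fin R A" by (simp add: fin0)
next
  fix r0 Q1 Qx Q2 x Sx A1 A2
  assume R: "R = r0 # Q1 @ Qx @ Q2" and it: "itm Qx x Sx" and f1: "fin (Q1 @ [Pr r0 x]) A1"
    and f2: "fin (Q2 @ [Pr x r0]) A2" and A: "A = {Pr r0 x, Pr x r0} \<union> Sx \<union> A1 \<union> A2"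
  have "fin ([] @ r0 # Q1 @ x # Q2) ({Pr r0 x, Pr x r0} \<union> A1 \<union> A2)"
    using fin.finm[OF f1, of Q2 "[]"] f2 by simp
  hence "fin ((r0 # Q1) @ x # Q2) ({Pr r0 x, Pr x r0} \<union> A1 \<union> A2)" by simp
  from uncontract_itm[OF it this] show "fin R A" using R A by (simp add: Un_ac)
qed

lemma split3:
  assumes "U @ y # V = A @ B @ C"
  shows "(\<exists>U'. A = U @ y # U' \<and> V = U' @ B @ C) \<or>
         (\<exists>B1 B2. B = B1 @ y # B2 \<and> U = A @ B1 \<and> V = B2 @ C) \<or>
         (\<exists>C1. C = C1 @ y # V \<and> U = A @ B @ C1)"
proof -
  from assms have "U @ y # V = A @ (B @ C)" by simp
  then obtain vs where "(U = A @ vs \<and> vs @ y # V = B @ C) \<or> (U @ vs = A \<and> y # V = vs @ (B @ C))"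
    by (auto simp: append_eq_append_conv2)
  then consider (a) U' where "A = U @ y # U'" "V = U' @ B @ C"
    | (b) W where "U = A @ W" "W @ y # V = B @ C"
  proof (elim disjE conjE)
    assume "U = A @ vs" "vs @ y # V = B @ C" then show thesis using that(2) by blast
  next
    assume h: "U @ vs = A" "y # V = vs @ (B @ C)"
    show thesis
    proof (cases vs)
      case Nil then show ?thesis using h that(2)[of "[]"] by simp
    next
      case (Cons u us') then show ?thesis using h that(1)[of us'] by simp
    qed
  qed
  then show ?thesis
  proof cases
    case a then show ?thesis by blast
  next
    case b
    from b(2) obtain us where "(W = B @ us \<and> us @ y # V = C) \<or> (W @ us = B \<and> y # V = us @ C)"
      by (auto simp: append_eq_append_conv2)
    then consider (b1) B2 where "B = W @ y # B2" "V = B2 @ C"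
      | (c) C1 where "W = B @ C1" "C = C1 @ y # V"
    proof (elim disjE conjE)
      assume "W = B @ us" "us @ y # V = C" then show thesis using that(2) by blast
    next
      assume h: "W @ us = B" "y # V = us @ C"
      show thesis
      proof (cases us)
        case Nil then show ?thesis using h that(2)[of "[]"] by simp
      next
        case (Cons u us') then show ?thesis using h that(1)[of us'] by simp
      qed
    qed
    then show ?thesis
    proof cases
      case b1 then show ?thesis using b by blast
    next
      case c then show ?thesis using b by auto
    qed
  qed
qed

lemma uncontract_itm2:
  "itm Q x S \<Longrightarrow> Q = U @ Pr b a # V \<Longrightarrow> fin (M @ [Pr a b]) D \<Longrightarrow>
   itm (U @ a # M @ b # V) x ({Pr a b, Pr b a} \<union> D \<union> S)"
proof (induction arbitrary: U V rule: itm.induct)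
  case (itl z)
  then have "U = []" "V = []" "z = Pr b a" by (auto simp: Cons_eq_append_conv)
  moreover have "itm ([a] @ M @ [b]) (Pr b a) ({Pr a b, Pr b a} \<union> {} \<union> {} \<union> D)"
    using itm.itn[OF itm.itl itm.itl itl.prems(2)] .
  ultimately show ?case by simp
next
  case (itn Qa xa Sa Qb xb Sb Qm Sm)
  from split3[OF itn.prems(1)[symmetric]] show ?case
  proof (elim disjE exE conjE)
    fix U' assume 1: "Qa = U @ Pr b a # U'" "V = U' @ Qm @ Qb"
    have "itm (U @ a # M @ b # U') xa ({Pr a b, Pr b a} \<union> D \<union> Sa)"
      using itn.IH(1)[OF 1(1) itn.prems(2)] .
    from itm.itn[OF this itn.hyps(2) itn.hyps(3)] show ?thesis
      using 1 by (simp add: Un_ac insert_commute)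
  next
    fix B1 B2 assume 1: "Qm = B1 @ Pr b a # B2" "U = Qa @ B1" "V = B2 @ Qb"
    have "fin (B1 @ Pr b a # (B2 @ [Pr xa xb])) Sm" using itn.hyps(3) 1 by simp
    from uncontract_fin[OF this itn.prems(2)]
    have "fin ((B1 @ a # M @ b # B2) @ [Pr xa xb]) ({Pr a b, Pr b a} \<union> D \<union> Sm)" by simp
    from itm.itn[OF itn.hyps(1) itn.hyps(2) this] show ?thesis
      using 1 by (simp add: Un_ac insert_commute)
  next
    fix C1 assume 1: "Qb = C1 @ Pr b a # V" "U = Qa @ Qm @ C1"
    have "itm (C1 @ a # M @ b # V) xb ({Pr a b, Pr b a} \<union> D \<union> Sb)"
      using itn.IH(2)[OF 1(1) itn.prems(2)] .
    from itm.itn[OF itn.hyps(1) this itn.hyps(3)] show ?thesis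
      using 1 by (simp add: Un_ac insert_commute)
  qed
qed

lemma fin_cfin: "fin R A \<Longrightarrow> cfin R A"
proof (induction "length R" arbitrary: R A rule: less_induct)
  case less
  from less.prems show ?case
  proof (cases rule: fin.cases)
    case fin0 then show ?thesis by (simp add: cfin_def)
  next
    case (finm M a b AX P' P AY)
    show ?thesis
    proof (cases P)
      case Nil
      have "cfin R A" unfolding cfin_def
        apply (rule disjI2)
        apply (rule exI[of _ a], rule exI[of _ M], rule exI[of _ "[b]"], rule exI[of _ P'])
        apply (rule exI[of _ b], rule exI[of _ "{}"], rule exI[of _ AX], rule exI[of _ AY])
        using finm Nil by (auto intro: itm.itl)
      then show ?thesis .
    next
      case (Cons r0 P0)
      have fY0: "fin (r0 # P0 @ Pr b a # P') AY"
        using fin_rot[of P' "r0 # P0 @ [Pr b a]" AY] finm Cons by simp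
      have "length (r0 # P0 @ Pr b a # P') < length R" using finm Cons by simp
      with less.hyps fY0 have "cfin (r0 # P0 @ Pr b a # P') AY" by blast
      then obtain Q1 Qx Q2 x Sx A1 A2 where
        eq: "P0 @ Pr b a # P' = Q1 @ Qx @ Q2" and it: "itm Qx x Sx"
        and f1: "fin (Q1 @ [Pr r0 x]) A1" and f2: "fin (Q2 @ [Pr x r0]) A2"
        and AY: "AY = {Pr r0 x, Pr x r0} \<union> Sx \<union> A1 \<union> A2"
        unfolding cfin_def by auto
      have fX: "fin (M @ [Pr a b]) AX" using finm by simp
      have R: "R = r0 # P0 @ a # M @ b # P'" using finm Cons by simp
      have A: "A = {Pr a b, Pr b a} \<union> AX \<union> AY" using finm by simp
      from split3[OF eq] show ?thesis
      proof (elim disjE exE conjE)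
        fix U' assume 1: "Q1 = P0 @ Pr b a # U'" "P' = U' @ Qx @ Q2"
        have "fin (P0 @ Pr b a # (U' @ [Pr r0 x])) A1" using f1 1 by simp
        from uncontract_fin[OF this fX]
        have "fin ((P0 @ a # M @ b # U') @ [Pr r0 x]) ({Pr a b, Pr b a} \<union> AX \<union> A1)" by simp
        note fA = this
        show ?thesis
          by (rule cfinI[OF _ it fA f2]) (use R 1 A AY in \<open>auto simp: Un_ac\<close>)
      next
        fix B1 B2 assume 1: "Qx = B1 @ Pr b a # B2" "P0 = Q1 @ B1" "P' = B2 @ Q2"
        from uncontract_itm2[OF it 1(1) fX]
        have "itm (B1 @ a # M @ b # B2) x ({Pr a b, Pr b a} \<union> AX \<union> Sx)" .
        note fA = this
        show ?thesis
          by (rule cfinI[OF _ fA f1 f2]) (use R 1 A AY in \<open>auto simp: Un_ac\<close>)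
      next
        fix C1 assume 1: "Q2 = C1 @ Pr b a # P'" "P0 = Q1 @ Qx @ C1"
        have "fin (C1 @ Pr b a # (P' @ [Pr x r0])) A2" using f2 1 by simp
        from uncontract_fin[OF this fX]
        have "fin ((C1 @ a # M @ b # P') @ [Pr x r0]) ({Pr a b, Pr b a} \<union> AX \<union> A2)" by simp
        note fA = this
        show ?thesis
          by (rule cfinI[OF _ it f1 fA]) (use R 1 A AY in \<open>auto simp: Un_ac\<close>)
      qed
    qed
  qed
qed

fun Outs :: "lbl list list \<Rightarrow> lbl set \<Rightarrow> bool" where
  "Outs [] C = (C = {})"
| "Outs (R # rs) C = (\<exists>A B. fin R A \<and> Outs rs B \<and> C = A \<union> B)"

lemma Outs_remove1:
  "R \<in> set rs \<Longrightarrow> Outs rs C \<longleftrightarrow> (\<exists>A B. fin R A \<and> Outs (remove1 R rs) B \<and> C = A \<union> B)"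
proof (induction rs arbitrary: C)
  case Nil then show ?case by simp
next
  case (Cons R' rs)
  show ?case
  proof (cases "R = R'")
    case True then show ?thesis by simp
  next
    case False
    then have R: "R \<in> set rs" using Cons.prems by simp
    have rm: "remove1 R (R' # rs) = R' # remove1 R rs" using False by simp
    show ?thesis
    proof
      assume "Outs (R' # rs) C"
      then obtain A' B' where a: "fin R' A'" and b: "Outs rs B'" and c: "C = A' \<union> B'" by auto
      from iffD1[OF Cons.IH[OF R] b] obtain A B where
        d: "fin R A" and e: "Outs (remove1 R rs) B" and f: "B' = A \<union> B" by blast
      have "Outs (remove1 R (R' # rs)) (A' \<union> B)" using rm a e by auto
      moreover have "C = A \<union> (A' \<union> B)" using c f by auto
      ultimately show "\<exists>A B. fin R A \<and> Outs (remove1 R (R' # rs)) B \<and> C = A \<union> B" using d by blast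
    next
      assume "\<exists>A B. fin R A \<and> Outs (remove1 R (R' # rs)) B \<and> C = A \<union> B"
      then obtain A B where d: "fin R A" and e: "Outs (R' # remove1 R rs) B" and c: "C = A \<union> B"
        using rm by auto
      from e obtain A' B'' where a: "fin R' A'" and g: "Outs (remove1 R rs) B''" and h: "B = A' \<union> B''"
        by auto
      have "Outs rs (A \<union> B'')" using iffD2[OF Cons.IH[OF R]] d g by blast
      moreover have "C = A' \<union> (A \<union> B'')" using c h by auto
      ultimately show "Outs (R' # rs) C" using a by auto
    qed
  qed
qed

lemma Outs_append: "Outs (xs @ ys) C \<longleftrightarrow> (\<exists>A B. Outs xs A \<and> Outs ys B \<and> C = A \<union> B)"
proof (induction xs arbitrary: C)
  case Nil then show ?case by simp
next
  case (Cons x xs)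
  show ?case
  proof
    assume "Outs ((x # xs) @ ys) C"
    then obtain A B where a: "fin x A" and b: "Outs (xs @ ys) B" and c: "C = A \<union> B" by auto
    from b obtain A1 B1 where "Outs xs A1" "Outs ys B1" "B = A1 \<union> B1" using Cons.IH by blast
    then show "\<exists>A B. Outs (x # xs) A \<and> Outs ys B \<and> C = A \<union> B"
      using a c by (intro exI[of _ "A \<union> A1"] exI[of _ B1]) auto
  next
    assume "\<exists>A B. Outs (x # xs) A \<and> Outs ys B \<and> C = A \<union> B"
    then obtain A B where a: "Outs (x # xs) A" and b: "Outs ys B" and c: "C = A \<union> B" by blast
    from a obtain A1 B1 where d: "fin x A1" "Outs xs B1" "A = A1 \<union> B1" by auto
    have "Outs (xs @ ys) (B1 \<union> B)" using Cons.IH d b by blast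
    then show "Outs ((x # xs) @ ys) C" using c d by auto
  qed
qed

lemma fin_small: "fin R A \<Longrightarrow> length R \<le> 1 \<Longrightarrow> A = {}"
  by (induction rule: fin.induct) auto

lemma Outs_small: "\<forall>R\<in>set rs. length R \<le> 1 \<Longrightarrow> Outs rs C \<longleftrightarrow> C = {}"
proof (induction rs arbitrary: C)
  case Nil then show ?case by simp
next
  case (Cons R rs)
  then show ?case by (auto intro: fin0 dest: fin_small)
qed

lemma decomp:
  assumes "i < j" "j < length R"
  shows "R = take i R @ R!i # take (j - Suc i) (drop (Suc i) R) @ R!j # drop (Suc j) R"
proof -
  have "R = take i R @ drop i R" by simp
  also have "drop i R = R!i # drop (Suc i) R" using assms by (simp add: Cons_nth_drop_Suc)
  also have "drop (Suc i) R = take (j - Suc i) (drop (Suc i) R) @ drop (j - Suc i) (drop (Suc i) R)"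
    by (simp only: append_take_drop_id)
  also have "drop (j - Suc i) (drop (Suc i) R) = drop j R" using assms by simp
  also have "drop j R = R!j # drop (Suc j) R" using assms by (simp add: Cons_nth_drop_Suc)
  finally show ?thesis .
qed

lemma reach_inv:
  "pbs_reach n rs L \<Longrightarrow> Outs rs C \<Longrightarrow>
   \<exists>A. fin (map Pt [1..<n+1]) A \<and> L \<union> C = Pt ` {1..n} \<union> A"
proof (induction arbitrary: C rule: pbs_reach.induct)
  case init then show ?case by auto
next
  case (move rs L R i j)
  define X where "X = take (j - Suc i) (drop (Suc i) R) @ [Pr (R!i) (R!j)]"
  define Y where "Y = drop (Suc j) R @ take i R @ [Pr (R!j) (R!i)]"
  from move.prems obtain C1 C2 where C: "C = C1 \<union> C2" and C1: "Outs (remove1 R rs) C1"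
    and C2: "Outs [X, Y] C2"
    unfolding X_def Y_def by (auto simp: Outs_append)
  from C2 obtain AX AY where fX: "fin X AX" and fY: "fin Y AY" and C2e: "C2 = AX \<union> AY" by auto
  have "fin (take i R @ R!i # take (j - Suc i) (drop (Suc i) R) @ R!j # drop (Suc j) R)
          ({Pr (R!i) (R!j), Pr (R!j) (R!i)} \<union> AX \<union> AY)"
    using fin.finm[of "take (j - Suc i) (drop (Suc i) R)" "R!i" "R!j" AX "drop (Suc j) R" "take i R" AY]
      fX fY unfolding X_def Y_def by simp
  hence fR: "fin R ({Pr (R!i) (R!j), Pr (R!j) (R!i)} \<union> AX \<union> AY)"
    using decomp[OF move.hyps(3) move.hyps(4)] by simp
  have "Outs rs (({Pr (R!i) (R!j), Pr (R!j) (R!i)} \<union> AX \<union> AY) \<union> C1)"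
    using Outs_remove1[OF move.hyps(2)] fR C1 by blast
  from move.IH[OF this] obtain A where "fin (map Pt [1..<n+1]) A"
    and "L \<union> (({Pr (R!i) (R!j), Pr (R!j) (R!i)} \<union> AX \<union> AY) \<union> C1) = Pt ` {1..n} \<union> A" by blast
  then show ?case using C C2e by (intro exI[of _ A]) auto
qed

definition mu :: "lbl list list \<Rightarrow> nat" where
  "mu rs = sum_list (map (\<lambda>R. length R - 1) rs)"

lemma reach_complete:
  "pbs_reach n rs L \<Longrightarrow> Outs rs C \<Longrightarrow> \<exists>rs'. pbs_endstate n rs' (L \<union> C)"
proof (induction "mu rs" arbitrary: rs L C rule: less_induct)
  case less
  show ?case
  proof (cases "\<forall>R\<in>set rs. length R \<le> 1")
    case True
    then have "C = {}" using Outs_small less.prems(2) by blast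
    then show ?thesis using less.prems(1) True unfolding pbs_endstate_def by auto
  next
    case False
    then obtain R where R: "R \<in> set rs" and lR: "length R \<ge> 2" by force
    from Outs_remove1[OF R] less.prems(2) obtain AR B where fR: "fin R AR"
      and B: "Outs (remove1 R rs) B" and C: "C = AR \<union> B" by blast
    from fR show ?thesis
    proof (cases rule: fin.cases)
      case fin0 then show ?thesis using lR by simp
    next
      case (finm M a b AX P' P AY)
      define i where "i = length P"
      define j where "j = length P + length M + 1"
      have ij: "i < j" "j < length R" using finm unfolding i_def j_def by auto
      have Ri: "R!i = a" using finm unfolding i_def by (simp add: nth_append)
      have Rj: "R!j = b" using finm unfolding j_def by (simp add: nth_append)
      have t1: "take i R = P" using finm unfolding i_def by simp
      have t2: "take (j - Suc i) (drop (Suc i) R) = M" using finm unfolding i_def j_def by simp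
      have t3: "drop (Suc j) R = P'" using finm unfolding j_def by simp
      define rs' where "rs' = remove1 R rs @ [M @ [Pr a b], P' @ P @ [Pr b a]]"
      have reach: "pbs_reach n rs' (L \<union> {Pr a b, Pr b a})"
        using pbs_reach.move[OF less.prems(1) R ij] Ri Rj t1 t2 t3 unfolding rs'_def by simp
      have O: "Outs rs' (B \<union> (AX \<union> AY))"
        unfolding rs'_def Outs_append using B finm by auto
      have "mu rs = (length R - 1) + mu (remove1 R rs)"
        unfolding mu_def using sum_list_map_remove1[OF R] by simp
      moreover have "mu rs' = mu (remove1 R rs) + length M + (length P' + length P)"
        unfolding mu_def rs'_def by simp
      moreover have "length R = length P + length M + length P' + 2" using finm by simp
      ultimately have "mu rs' < mu rs" by simp
      from less.hyps[OF this reach O] obtain rs'' where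
        "pbs_endstate n rs'' ((L \<union> {Pr a b, Pr b a}) \<union> (B \<union> (AX \<union> AY)))" by blast
      moreover have "(L \<union> {Pr a b, Pr b a}) \<union> (B \<union> (AX \<union> AY)) = L \<union> C"
        using C finm by auto
      ultimately show ?thesis by auto
    qed
  qed
qed

lemma fin_Pr: "fin R A \<Longrightarrow> t \<in> A \<Longrightarrow> \<exists>u v. t = Pr u v"
  by (induction arbitrary: t rule: fin.induct) auto

lemma count_fin: "pbs_count n = card {A. fin (map Pt [1..<n+1]) A}"
proof -
  define R0 where "R0 = map Pt [1..<n+1]"
  define P where "P = Pt ` {1..n}"
  have eq: "{L. \<exists>rs. pbs_endstate n rs L} = (\<lambda>A. P \<union> A) ` {A. fin R0 A}"
  proof (rule set_eqI iffI)+
    fix L assume "L \<in> {L. \<exists>rs. pbs_endstate n rs L}"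
    then obtain rs where e: "pbs_endstate n rs L" by blast
    hence "Outs rs {}" using Outs_small unfolding pbs_endstate_def by blast
    from reach_inv[OF _ this] e obtain A where "fin R0 A" "L \<union> {} = P \<union> A"
      unfolding pbs_endstate_def R0_def P_def by blast
    then show "L \<in> (\<lambda>A. P \<union> A) ` {A. fin R0 A}" by auto
  next
    fix L assume "L \<in> (\<lambda>A. P \<union> A) ` {A. fin R0 A}"
    then obtain A where A: "fin R0 A" and L: "L = P \<union> A" by blast
    have "Outs [map Pt [1..<n+1]] A" using A unfolding R0_def by auto
    from reach_complete[OF pbs_reach.init this] obtain rs' where "pbs_endstate n rs' (P \<union> A)"
      unfolding P_def by auto
    then show "L \<in> {L. \<exists>rs. pbs_endstate n rs L}" using L by blast
  qed
  have inj: "inj_on (\<lambda>A. P \<union> A) {A. fin R0 A}"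
  proof (rule inj_onI)
    fix A A' assume "A \<in> {A. fin R0 A}" "A' \<in> {A. fin R0 A}" and e: "P \<union> A = P \<union> A'"
    hence "A \<inter> P = {}" "A' \<inter> P = {}" unfolding P_def by (auto dest: fin_Pr)
    with e show "A = A'" by blast
  qed
  have "card ((\<lambda>A. P \<union> A) ` {A. fin R0 A}) = card {A. fin R0 A}" by (rule card_image[OF inj])
  then show ?thesis unfolding pbs_count_def eq R0_def by simp
qed

fun sub :: "lbl \<Rightarrow> lbl set" where
  "sub (Pt i) = {Pt i}"
| "sub (Pr a b) = insert (Pr a b) (sub a \<union> sub b)"

lemma sub_refl [simp]: "t \<in> sub t"
  by (cases t) auto

lemma sub_trans: "s \<in> sub t \<Longrightarrow> t \<in> sub u \<Longrightarrow> s \<in> sub u"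
  by (induction u) auto

lemma sub_size: "s \<in> sub t \<Longrightarrow> size s \<le> size t"
  by (induction t) auto

lemma sub_Pr_left: "a \<in> sub (Pr a b)" and sub_Pr_right: "b \<in> sub (Pr a b)"
  by auto

lemma Pr_not_sub_left: "Pr a b \<notin> sub a"
  using sub_size[of "Pr a b" a] by auto

lemma Pr_not_sub_right: "Pr a b \<notin> sub b"
  using sub_size[of "Pr a b" b] by auto

lemma sub_Pr_sub_left: "Pr a b \<in> sub t \<Longrightarrow> a \<in> sub t"
  using sub_trans[OF sub_Pr_left] .

lemma sub_Pr_sub_right: "Pr a b \<in> sub t \<Longrightarrow> b \<in> sub t"
  using sub_trans[OF sub_Pr_right] .

lemma Pr_neq_left [simp]: "Pr a b \<noteq> a" and Pr_neq_right [simp]: "Pr a b \<noteq> b"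
  using Pr_not_sub_left Pr_not_sub_right sub_refl by metis+

inductive_set clo :: "lbl set \<Rightarrow> lbl set" for Z where
  atom: "z \<in> Z \<Longrightarrow> z \<in> clo Z"
| pr: "u \<in> clo Z \<Longrightarrow> v \<in> clo Z \<Longrightarrow> Pr u v \<in> clo Z"

lemma clo_sub: "t \<in> clo Z \<Longrightarrow> s \<in> sub t \<Longrightarrow> s \<in> clo Z \<or> (\<exists>z\<in>Z. s \<in> sub z)"
  by (induction rule: clo.induct) (auto intro: clo.intros)

lemma clo_atom: "t \<in> clo Z \<Longrightarrow> \<exists>z\<in>Z. z \<in> sub t"
proof (induction rule: clo.induct)
  case (atom z) then show ?case using sub_refl by blast
next
  case (pr u v) then show ?case by auto
qed

lemma clo_clo_aux: "t \<in> clo Z \<Longrightarrow> Z \<subseteq> clo W \<Longrightarrow> t \<in> clo W"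
  by (induction rule: clo.induct) (auto intro: clo.intros)

lemma clo_clo: "Z \<subseteq> clo W \<Longrightarrow> t \<in> clo Z \<Longrightarrow> t \<in> clo W"
  using clo_clo_aux by blast

lemma clo_mono_aux: "t \<in> clo Z \<Longrightarrow> Z \<subseteq> W \<Longrightarrow> t \<in> clo W"
  by (induction rule: clo.induct) (auto intro: clo.intros)

lemma clo_mono: "Z \<subseteq> W \<Longrightarrow> t \<in> clo Z \<Longrightarrow> t \<in> clo W"
  using clo_mono_aux by blast

definition gen :: "lbl list \<Rightarrow> bool" where
  "gen R \<longleftrightarrow> distinct R \<and> (\<forall>u\<in>set R. \<forall>v\<in>set R. u \<in> sub v \<longrightarrow> u = v)"

lemma gen_sub: "gen R \<Longrightarrow> u \<in> set R \<Longrightarrow> v \<in> set R \<Longrightarrow> u \<in> sub v \<Longrightarrow> u = v"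
  unfolding gen_def by blast

lemma gen_sublist: "gen R \<Longrightarrow> distinct R' \<Longrightarrow> set R' \<subseteq> set R \<Longrightarrow> gen R'"
  unfolding gen_def by blast

lemma supp: "gen R \<Longrightarrow> W \<subseteq> set R \<Longrightarrow> u \<in> set R \<Longrightarrow> u \<notin> W \<Longrightarrow> t \<in> clo W \<Longrightarrow> u \<notin> sub t"
proof
  assume g: "gen R" and W: "W \<subseteq> set R" and u: "u \<in> set R" "u \<notin> W" and t: "t \<in> clo W"
    and s: "u \<in> sub t"
  from clo_sub[OF t s] show False
  proof
    assume "u \<in> clo W"
    then obtain z where "z \<in> W" "z \<in> sub u" using clo_atom by blast
    then show False using gen_sub[OF g, of z u] W u by auto
  next
    assume "\<exists>z\<in>W. u \<in> sub z"
    then obtain z where "z \<in> W" "u \<in> sub z" by blast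
    then show False using gen_sub[OF g, of u z] W u by auto
  qed
qed

lemma supp_clo: "gen R \<Longrightarrow> W \<subseteq> set R \<Longrightarrow> u \<in> set R \<Longrightarrow> u \<notin> W \<Longrightarrow> u \<notin> clo W"
  using supp[of R W u u] by auto

lemma fin_new: "fin R A \<Longrightarrow> t \<in> A \<Longrightarrow> \<exists>u v. t = Pr u v \<and> u \<in> clo (set R) \<and> v \<in> clo (set R)"
proof (induction arbitrary: t rule: fin.induct)
  case (fin0 R) then show ?case by simp
next
  case (finm M a b A P' P B)
  let ?R = "P @ a # M @ b # P'"
  have X: "set (M @ [Pr a b]) \<subseteq> clo (set ?R)" by (auto intro: clo.intros)
  have Y: "set (P' @ P @ [Pr b a]) \<subseteq> clo (set ?R)" by (auto intro: clo.intros)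
  from finm.prems consider "t = Pr a b" | "t = Pr b a" | "t \<in> A" | "t \<in> B" by blast
  then show ?case
  proof cases
    case 3
    then obtain u v where "t = Pr u v" "u \<in> clo (set (M @ [Pr a b]))" "v \<in> clo (set (M @ [Pr a b]))"
      using finm.IH(1) by blast
    then show ?thesis using clo_clo[OF X] by blast
  next
    case 4
    then obtain u v where "t = Pr u v" "u \<in> clo (set (P' @ P @ [Pr b a]))" "v \<in> clo (set (P' @ P @ [Pr b a]))"
      using finm.IH(2) by blast
    then show ?thesis using clo_clo[OF Y] by blast
  qed (auto intro: clo.intros)
qed

lemma fin_clo: "fin R A \<Longrightarrow> A \<subseteq> clo (set R)"
proof
  fix t assume "fin R A" "t \<in> A"
  then obtain u v where "t = Pr u v" "u \<in> clo (set R)" "v \<in> clo (set R)" using fin_new by blast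
  then show "t \<in> clo (set R)" using clo.pr by simp
qed

lemma fin_disj: "gen R \<Longrightarrow> fin R A \<Longrightarrow> A \<inter> set R = {}"
proof (rule ccontr)
  assume g: "gen R" and f: "fin R A" and "A \<inter> set R \<noteq> {}"
  then obtain t where t: "t \<in> A" "t \<in> set R" by blast
  then obtain u v where tu: "t = Pr u v" "u \<in> clo (set R)" using fin_new[OF f] by blast
  then obtain z where z: "z \<in> set R" "z \<in> sub u" using clo_atom by blast
  hence "z \<in> sub t" using tu sub_trans sub_Pr_left by blast
  hence "z = t" using gen_sub[OF g z(1) t(2)] by simp
  then show False using z(2) tu Pr_not_sub_left by simp
qed

lemma itm_props:
  "itm Q x S \<Longrightarrow> Q \<noteq> [] \<and> x \<in> clo (set Q) \<and> hd Q \<in> sub x \<and> last Q \<in> sub x \<and> S \<subseteq> clo (set Q)"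
proof (induction rule: itm.induct)
  case (itl z) then show ?case by (auto intro: clo.intros)
next
  case (itn Qa xa Sa Qb xb Sb Qm Sm)
  let ?Q = "Qa @ Qm @ Qb"
  have a: "clo (set Qa) \<subseteq> clo (set ?Q)" "clo (set Qb) \<subseteq> clo (set ?Q)"
    using clo_mono[of "set Qa" "set ?Q"] clo_mono[of "set Qb" "set ?Q"] by auto
  have xa: "xa \<in> clo (set ?Q)" "xb \<in> clo (set ?Q)" using itn.IH a by auto
  have M: "set (Qm @ [Pr xa xb]) \<subseteq> clo (set ?Q)"
    using xa clo.pr[OF xa] clo.atom[of _ "set ?Q"] by auto
  have Sm: "Sm \<subseteq> clo (set ?Q)" using fin_clo[OF itn.hyps(3)] clo_clo[OF M] by blast
  have h: "hd ?Q = hd Qa" "last ?Q = last Qb" using itn.IH by auto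
  have 1: "Pr xb xa \<in> clo (set ?Q)" using clo.pr[OF xa(2) xa(1)] .
  have 2: "hd ?Q \<in> sub (Pr xb xa)" using h itn.IH sub_trans[OF _ sub_Pr_right] by metis
  have 3: "last ?Q \<in> sub (Pr xb xa)" using h itn.IH sub_trans[OF _ sub_Pr_left] by metis
  have p: "Pr xa xb \<in> clo (set ?Q)" using M by simp
  have sa: "Sa \<subseteq> clo (set Qa)" using itn.IH(1) by simp
  have sb: "Sb \<subseteq> clo (set Qb)" using itn.IH(2) by simp
  have 4: "{Pr xa xb, Pr xb xa} \<union> Sa \<union> Sb \<union> Sm \<subseteq> clo (set ?Q)"
    using 1 p Sm sa sb a(1) a(2) by blast
  have 5: "?Q \<noteq> []" using itn.IH(1) by simp
  show ?case using 1 2 3 4 5 by blast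
qed

lemma itm_len: "itm Q x S \<Longrightarrow> length Q = 1 \<Longrightarrow> Q = [x] \<and> S = {}"
proof (induction rule: itm.induct)
  case (itn Qa xa Sa Qb xb Sb Qm Sm)
  have "Qa \<noteq> []" "Qb \<noteq> []" using itm_props[OF itn.hyps(1)] itm_props[OF itn.hyps(2)] by simp_all
  then have "length (Qa @ Qm @ Qb) \<ge> 2" by (cases Qa; cases Qb) simp_all
  then show ?case using itn.prems by simp
qed simp

lemma sub_size_less: "s \<in> sub t \<Longrightarrow> s \<noteq> t \<Longrightarrow> size s < size t"
  by (induction t) (auto dest: sub_size)

lemma sub_antisym: "s \<in> sub t \<Longrightarrow> t \<in> sub s \<Longrightarrow> s = t"
  using sub_size_less sub_size by fastforce

locale ctx =
  fixes r0 :: lbl and Q Qx :: "lbl list" and x :: lbl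
  assumes g: "gen (r0 # Q)" and qx: "set Qx \<subseteq> set Q" and xc: "x \<in> clo (set Qx)"
begin

lemma r0Q: "r0 \<notin> set Q"
  using g unfolding gen_def by simp

lemma S1: "r0 \<notin> sub x"
  using supp[OF g _ _ _ xc, of r0] qx r0Q by auto

lemma S2: "u \<in> set Q \<Longrightarrow> u \<notin> set Qx \<Longrightarrow> u \<notin> sub x"
  using supp[OF g _ _ _ xc, of u] qx by auto

lemma xr: "x \<noteq> r0"
  using S1 sub_refl by metis

lemma r0u: "u \<in> set Q \<Longrightarrow> r0 \<notin> sub u"
  using gen_sub[OF g, of r0 u] r0Q by auto

lemma ur0: "u \<in> set Q \<Longrightarrow> u \<notin> sub r0"
  using gen_sub[OF g, of u r0] r0Q by auto

lemma sub_e: "e = Pr r0 x \<or> e = Pr x r0 \<Longrightarrow> s \<in> sub e \<Longrightarrow> s = e \<or> s \<in> sub r0 \<or> s \<in> sub x"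
  by auto

lemma r0_e: "e = Pr r0 x \<or> e = Pr x r0 \<Longrightarrow> r0 \<in> sub e"
  by auto

lemma e_r0: "e = Pr r0 x \<or> e = Pr x r0 \<Longrightarrow> e \<notin> sub r0"
  using r0_e sub_antisym by fastforce

lemma e_notin_Q: "e = Pr r0 x \<or> e = Pr x r0 \<Longrightarrow> e \<notin> set Q"
  using r0_e r0u by blast

lemma pq_neq: "Pr r0 x \<noteq> Pr x r0"
  using xr by simp

context
  fixes Qs :: "lbl list" and e :: lbl
  assumes qs: "set Qs \<subseteq> set Q" and qsx: "set Qs \<inter> set Qx = {}" and dqs: "distinct Qs"
    and e: "e = Pr r0 x \<or> e = Pr x r0"
begin

lemma gen_side: "gen (Qs @ [e])"
  unfolding gen_def
proof (intro conjI ballI impI)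
  show "distinct (Qs @ [e])" using dqs e_notin_Q[OF e] qs by auto
next
  fix u v assume u: "u \<in> set (Qs @ [e])" and v: "v \<in> set (Qs @ [e])" and uv: "u \<in> sub v"
  show "u = v"
  proof (cases "u = e")
    case True
    show ?thesis
    proof (cases "v = e")
      case False
      then have "v \<in> set Q" using v qs by auto
      moreover have "r0 \<in> sub v" using r0_e[OF e] uv True sub_trans by blast
      ultimately show ?thesis using r0u by blast
    qed (simp add: True)
  next
    case False
    then have uQ: "u \<in> set Q" "u \<in> set Qs" using u qs by auto
    show ?thesis
    proof (cases "v = e")
      case True
      from sub_e[OF e, of u] uv True consider "u = e" | "u \<in> sub r0" | "u \<in> sub x" by blast
      then show ?thesis
      proof cases
        case 1 then show ?thesis using False by simp
      next
        case 2 then show ?thesis using ur0 uQ by blast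
      next
        case 3 then show ?thesis using S2[of u] uQ qsx by blast
      qed
    next
      case False
      then have "v \<in> set (r0 # Q)" using v qs by auto
      then show ?thesis using gen_sub[OF g _ _ uv] uQ by simp
    qed
  qed
qed

lemma side_Wx: "t \<in> clo (set (Qs @ [e])) \<Longrightarrow> t \<notin> clo (set Qx)"
proof
  assume t1: "t \<in> clo (set (Qs @ [e]))" and t2: "t \<in> clo (set Qx)"
  from clo_atom[OF t1] obtain z where z: "z \<in> set (Qs @ [e])" "z \<in> sub t" by blast
  have W: "set Qx \<subseteq> set (r0 # Q)" using qx by auto
  show False
  proof (cases "z = e")
    case True
    then have "r0 \<in> sub t" using r0_e[OF e] z sub_trans by blast
    then show False using supp[OF g W _ _ t2, of r0] r0Q qx by auto
  next
    case False
    then have "z \<in> set Qs" using z by simp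
    then show False using supp[OF g W _ _ t2, of z] qs qsx z by auto
  qed
qed

lemma r0_side: "r0 \<notin> clo (set (Qs @ [e]))"
proof
  assume "r0 \<in> clo (set (Qs @ [e]))"
  from clo_atom[OF this] obtain z where z: "z \<in> set (Qs @ [e])" "z \<in> sub r0" by blast
  show False
  proof (cases "z = e")
    case True then show False using e_r0[OF e] z by simp
  next
    case False then show False using z ur0 qs by auto
  qed
qed

lemma side_clo_W: "t \<in> clo (set (Qs @ [e])) \<Longrightarrow> t \<in> clo (set Qs \<union> {r0} \<union> set Qx)"
proof -
  assume t: "t \<in> clo (set (Qs @ [e]))"
  have "x \<in> clo (set Qs \<union> {r0} \<union> set Qx)" using clo_mono[OF _ xc] by blast
  moreover have "r0 \<in> clo (set Qs \<union> {r0} \<union> set Qx)" by (auto intro: clo.atom)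
  ultimately have "e \<in> clo (set Qs \<union> {r0} \<union> set Qx)" using e by (auto intro: clo.pr)
  then have "set (Qs @ [e]) \<subseteq> clo (set Qs \<union> {r0} \<union> set Qx)" by (auto intro: clo.atom)
  then show ?thesis using clo_clo t by blast
qed

end

lemma cross:
  assumes qs: "set Qs \<subseteq> set Q" and qsx: "set Qs \<inter> set Qx = {}" and dqs: "distinct Qs"
    and e: "e = Pr r0 x \<or> e = Pr x r0"
    and qs': "set Qs' \<subseteq> set Q" and qsx': "set Qs' \<inter> set Qx = {}" and dqs': "distinct Qs'"
    and e': "e' = Pr r0 x \<or> e' = Pr x r0"
    and ee: "e \<noteq> e'" and dis: "set Qs \<inter> set Qs' = {}"
    and t: "t \<in> clo (set (Qs @ [e]))"
  shows "t \<notin> clo (set (Qs' @ [e']))"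
proof
  assume t': "t \<in> clo (set (Qs' @ [e']))"
  from clo_atom[OF t'] obtain z' where z': "z' \<in> set (Qs' @ [e'])" "z' \<in> sub t" by blast
  have tW: "t \<in> clo (set Qs \<union> {r0} \<union> set Qx)" using side_clo_W[OF qs qsx dqs e t] .
  have W: "set Qs \<union> {r0} \<union> set Qx \<subseteq> set (r0 # Q)" using qs qx by auto
  show False
  proof (cases "z' = e'")
    case False
    then have "z' \<in> set Qs'" using z' by simp
    moreover have "z' \<notin> set Qs \<union> {r0} \<union> set Qx" using calculation dis qsx' qs' r0Q by auto
    ultimately show False using supp[OF g W _ _ tW, of z'] z'(2) qs' by auto
  next
    case True
    from clo_sub[OF t, of e'] z' True
    have "e' \<in> clo (set (Qs @ [e])) \<or> (\<exists>z\<in>set (Qs @ [e]). e' \<in> sub z)" by simp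
    then show False
    proof
      assume "\<exists>z\<in>set (Qs @ [e]). e' \<in> sub z"
      then obtain z where z: "z \<in> set (Qs @ [e])" "e' \<in> sub z" by blast
      show False
      proof (cases "z = e")
        case False
        then have "z \<in> set Q" using z qs by auto
        then show False using r0u r0_e[OF e'] z sub_trans by blast
      next
        case True
        from sub_e[OF e, of e'] z True consider "e' = e" | "e' \<in> sub r0" | "e' \<in> sub x" by blast
        then show False
        proof cases
          case 1 then show False using ee by simp
        next
          case 2 then show False using e_r0[OF e'] by simp
        next
          case 3 then show False using S1 r0_e[OF e'] sub_trans by blast
        qed
      qed
    next
      assume "e' \<in> clo (set (Qs @ [e]))"
      then show False
      proof (cases rule: clo.cases)
        case atom
        then show False using ee e_notin_Q[OF e'] qs by auto
      next
        case (pr u v)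
        from e' show False
        proof
          assume "e' = Pr r0 x" then have "u = r0" using pr by simp
          then show False using pr r0_side[OF qs qsx dqs e] by simp
        next
          assume "e' = Pr x r0" then have "v = r0" using pr by simp
          then show False using pr r0_side[OF qs qsx dqs e] by simp
        qed
      qed
    qed
  qed
qed

end

lemma region_ctx:
  assumes g: "gen (r0 # Q)" and Q: "Q = Q1 @ Qx @ Q2" and it: "itm Qx x Sx"
    and f1: "fin (Q1 @ [Pr r0 x]) A1" and f2: "fin (Q2 @ [Pr x r0]) A2"
    and S: "S = {Pr r0 x, Pr x r0} \<union> Sx \<union> A1 \<union> A2"
  shows "gen Qx \<and> gen (Q1 @ [Pr r0 x]) \<and> gen (Q2 @ [Pr x r0]) \<and> (\<forall>y. Pr r0 y \<in> S \<longrightarrow> y = x) \<and>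
         Sx = S \<inter> clo (set Qx) \<and> A1 = S \<inter> clo (set (Q1 @ [Pr r0 x])) - {Pr r0 x} \<and>
         A2 = S \<inter> clo (set (Q2 @ [Pr x r0])) - {Pr x r0}"
proof -
  have ip: "x \<in> clo (set Qx)" "Sx \<subseteq> clo (set Qx)" using itm_props[OF it] by auto
  interpret ctx r0 Q Qx x
    by unfold_locales (use g Q ip in auto)
  have dQ: "distinct Q" using g unfolding gen_def by simp
  hence d: "distinct Q1" "distinct Qx" "distinct Q2" "set Q1 \<inter> set Qx = {}" "set Q2 \<inter> set Qx = {}"
    "set Q1 \<inter> set Q2 = {}" using Q by auto
  have ss: "set Q1 \<subseteq> set Q" "set Q2 \<subseteq> set Q" "set Qx \<subseteq> set Q" using Q by auto
  have gQx: "gen Qx" using gen_sublist[OF g d(2)] ss by auto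
  have ep: "Pr r0 x = Pr r0 x \<or> Pr r0 x = Pr x r0" and eq: "Pr x r0 = Pr r0 x \<or> Pr x r0 = Pr x r0" by simp_all
  have gX: "gen (Q1 @ [Pr r0 x])" using gen_side[OF ss(1) d(4) d(1) ep] .
  have gY: "gen (Q2 @ [Pr x r0])" using gen_side[OF ss(2) d(5) d(3) eq] .
  let ?X = "Q1 @ [Pr r0 x]" and ?Y = "Q2 @ [Pr x r0]"
  have pX: "Pr r0 x \<in> clo (set ?X)" and qY: "Pr x r0 \<in> clo (set ?Y)" by (auto intro: clo.atom)
  have cXY: "\<And>t. t \<in> clo (set ?X) \<Longrightarrow> t \<notin> clo (set ?Y)"
    using cross[OF ss(1) d(4) d(1) ep ss(2) d(5) d(3) eq pq_neq] d(6) by blast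
  have cYX: "\<And>t. t \<in> clo (set ?Y) \<Longrightarrow> t \<notin> clo (set ?X)"
    using cross[OF ss(2) d(5) d(3) eq ss(1) d(4) d(1) ep pq_neq[symmetric]] d(6) by blast
  have wX: "\<And>t. t \<in> clo (set ?X) \<Longrightarrow> t \<notin> clo (set Qx)" using side_Wx[OF ss(1) d(4) d(1) ep] by blast
  have wY: "\<And>t. t \<in> clo (set ?Y) \<Longrightarrow> t \<notin> clo (set Qx)" using side_Wx[OF ss(2) d(5) d(3) eq] by blast
  have A1c: "A1 \<subseteq> clo (set ?X)" using fin_clo[OF f1] .
  have A2c: "A2 \<subseteq> clo (set ?Y)" using fin_clo[OF f2] .
  have pA1: "Pr r0 x \<notin> A1" using fin_disj[OF gX f1] by auto
  have qA2: "Pr x r0 \<notin> A2" using fin_disj[OF gY f2] by auto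
  have e1: "Sx = S \<inter> clo (set Qx)"
  proof
    show "Sx \<subseteq> S \<inter> clo (set Qx)" using S ip by auto
  next
    show "S \<inter> clo (set Qx) \<subseteq> Sx"
    proof
      fix t assume t: "t \<in> S \<inter> clo (set Qx)"
      have "t \<noteq> Pr r0 x" using t wX[OF pX] by auto
      moreover have "t \<noteq> Pr x r0" using t wY[OF qY] by auto
      moreover have "t \<notin> A1" using t wX A1c by blast
      moreover have "t \<notin> A2" using t wY A2c by blast
      ultimately show "t \<in> Sx" using t S by blast
    qed
  qed
  have e2: "A1 = S \<inter> clo (set ?X) - {Pr r0 x}"
  proof
    show "A1 \<subseteq> S \<inter> clo (set ?X) - {Pr r0 x}" using S A1c pA1 by auto
  next
    show "S \<inter> clo (set ?X) - {Pr r0 x} \<subseteq> A1"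
    proof
      fix t assume t: "t \<in> S \<inter> clo (set ?X) - {Pr r0 x}"
      have "t \<noteq> Pr x r0" using t cYX[OF qY] by auto
      moreover have "t \<notin> Sx" using t wX ip by blast
      moreover have "t \<notin> A2" using t cYX A2c by blast
      ultimately show "t \<in> A1" using t S by blast
    qed
  qed
  have e3: "A2 = S \<inter> clo (set ?Y) - {Pr x r0}"
  proof
    show "A2 \<subseteq> S \<inter> clo (set ?Y) - {Pr x r0}" using S A2c qA2 by auto
  next
    show "S \<inter> clo (set ?Y) - {Pr x r0} \<subseteq> A2"
    proof
      fix t assume t: "t \<in> S \<inter> clo (set ?Y) - {Pr x r0}"
      have "t \<noteq> Pr r0 x" using t cXY[OF pX] by auto
      moreover have "t \<notin> Sx" using t wY ip by blast
      moreover have "t \<notin> A1" using t cXY A1c by blast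
      ultimately show "t \<in> A2" using t S by blast
    qed
  qed
  have e4: "\<forall>y. Pr r0 y \<in> S \<longrightarrow> y = x"
  proof (intro allI impI)
    fix y assume y: "Pr r0 y \<in> S"
    have W: "set Qx \<subseteq> set (r0 # Q)" using ss by auto
    have n1: "Pr r0 y \<noteq> Pr x r0" using xr by simp
    have n2: "Pr r0 y \<notin> Sx"
    proof
      assume "Pr r0 y \<in> Sx"
      hence "Pr r0 y \<in> clo (set Qx)" using ip by auto
      from supp[OF g W _ _ this, of r0] r0Q ss(3) show False by auto
    qed
    have n3: "Pr r0 y \<notin> A1"
    proof
      assume "Pr r0 y \<in> A1"
      from fin_new[OF f1 this] have "r0 \<in> clo (set ?X)" by auto
      then show False using r0_side[OF ss(1) d(4) d(1) ep] by simp
    qed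
    have n4: "Pr r0 y \<notin> A2"
    proof
      assume "Pr r0 y \<in> A2"
      from fin_new[OF f2 this] have "r0 \<in> clo (set ?Y)" by auto
      then show False using r0_side[OF ss(2) d(5) d(3) eq] by simp
    qed
    from y n1 n2 n3 n4 S show "y = x" by blast
  qed
  show ?thesis using gQx gX gY e1 e2 e3 e4 by blast
qed

lemma item_ctx:
  assumes g: "gen Q" and Q: "Q = Qa @ Qm @ Qb" and ia: "itm Qa xa Sa" and ib: "itm Qb xb Sb"
    and fm: "fin (Qm @ [Pr xa xb]) Sm"
    and S: "S = {Pr xa xb, Pr xb xa} \<union> Sa \<union> Sb \<union> Sm"
  shows "gen Qa \<and> gen Qb \<and> gen (Qm @ [Pr xa xb]) \<and> Sa = S \<inter> clo (set Qa) \<and>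
         Sb = S \<inter> clo (set Qb) \<and> Sm = S \<inter> clo (set (Qm @ [Pr xa xb])) - {Pr xa xb}"
proof -
  have pa: "Qa \<noteq> []" "xa \<in> clo (set Qa)" "hd Qa \<in> sub xa" "Sa \<subseteq> clo (set Qa)"
    using itm_props[OF ia] by auto
  have pb: "Qb \<noteq> []" "xb \<in> clo (set Qb)" "hd Qb \<in> sub xb" "Sb \<subseteq> clo (set Qb)"
    using itm_props[OF ib] by auto
  have dQ: "distinct Q" using g unfolding gen_def by simp
  hence d: "distinct Qa" "distinct Qm" "distinct Qb" "set Qa \<inter> set Qm = {}" "set Qb \<inter> set Qm = {}"
    "set Qa \<inter> set Qb = {}" using Q by auto
  have ss: "set Qa \<subseteq> set Q" "set Qm \<subseteq> set Q" "set Qb \<subseteq> set Q" using Q by auto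
  have ha: "hd Qa \<in> set Qa" "hd Qa \<in> set Q" using pa(1) ss by auto
  have hb: "hd Qb \<in> set Qb" "hd Qb \<in> set Q" using pb(1) ss by auto
  have suppA: "\<And>u t. u \<in> set Q \<Longrightarrow> u \<notin> set Qa \<Longrightarrow> t \<in> clo (set Qa) \<Longrightarrow> u \<notin> sub t"
    using supp[OF g ss(1)] by blast
  have suppB: "\<And>u t. u \<in> set Q \<Longrightarrow> u \<notin> set Qb \<Longrightarrow> t \<in> clo (set Qb) \<Longrightarrow> u \<notin> sub t"
    using supp[OF g ss(3)] by blast
  let ?pa = "Pr xa xb" and ?x = "Pr xb xa" and ?M = "Qm @ [Pr xa xb]"
  have ha_pa: "hd Qa \<in> sub ?pa" "hd Qa \<in> sub ?x" using pa(3) sub_trans by auto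
  have hb_pa: "hd Qb \<in> sub ?pa" "hd Qb \<in> sub ?x" using pb(3) sub_trans by auto
  have hbA: "hd Qb \<notin> set Qa" and haB: "hd Qa \<notin> set Qb" using ha hb d(6) by auto
  have N1: "\<And>t. hd Qb \<in> sub t \<Longrightarrow> t \<notin> clo (set Qa)" using suppA hb(2) hbA by blast
  have N2: "\<And>t. hd Qa \<in> sub t \<Longrightarrow> t \<notin> clo (set Qb)" using suppB ha(2) haB by blast
  have paQm: "?pa \<notin> set Qm"
  proof
    assume "?pa \<in> set Qm"
    hence "hd Qa = ?pa" using gen_sub[OF g ha(2) _ ha_pa(1)] ss by auto
    then show False using \<open>?pa \<in> set Qm\<close> ha d(4) by auto
  qed
  have gM: "gen ?M" unfolding gen_def
  proof (intro conjI ballI impI)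
    show "distinct ?M" using d(2) paQm by simp
  next
    fix u v assume u: "u \<in> set ?M" and v: "v \<in> set ?M" and uv: "u \<in> sub v"
    show "u = v"
    proof (cases "u = ?pa")
      case True
      show ?thesis
      proof (cases "v = ?pa")
        case False
        then have "v \<in> set Qm" using v by simp
        moreover have "hd Qa \<in> sub v" using sub_trans[OF ha_pa(1), of v] True uv by simp
        ultimately have "hd Qa = v" using gen_sub[OF g ha(2)] ss by auto
        then show ?thesis using \<open>v \<in> set Qm\<close> ha d(4) by auto
      qed (simp add: True)
    next
      case False
      then have uQ: "u \<in> set Qm" using u by simp
      show ?thesis
      proof (cases "v = ?pa")
        case True
        then have "u \<in> sub xa \<or> u \<in> sub xb" using uv False by simp
        then show ?thesis
        proof
          assume "u \<in> sub xa" then show ?thesis using suppA[OF _ _ pa(2), of u] uQ ss d(4) by auto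
        next
          assume "u \<in> sub xb" then show ?thesis using suppB[OF _ _ pb(2), of u] uQ ss d(5) by auto
        qed
      next
        case False
        then have "v \<in> set Qm" using v by simp
        then show ?thesis using gen_sub[OF g _ _ uv] uQ ss by auto
      qed
    qed
  qed
  have gA: "gen Qa" using gen_sublist[OF g d(1) ss(1)] .
  have gB: "gen Qb" using gen_sublist[OF g d(3) ss(3)] .
  have Smc: "Sm \<subseteq> clo (set ?M)" using fin_clo[OF fm] .
  have pSm: "?pa \<notin> Sm" using fin_disj[OF gM fm] by auto
  have AB: "\<And>t. t \<in> clo (set Qb) \<Longrightarrow> t \<notin> clo (set Qa)"
  proof -
    fix t assume t: "t \<in> clo (set Qb)"
    from clo_atom[OF t] obtain z where "z \<in> set Qb" "z \<in> sub t" by blast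
    then show "t \<notin> clo (set Qa)" using suppA[of z t] ss d(6) by blast
  qed
  have MA: "\<And>t. t \<in> clo (set ?M) \<Longrightarrow> t \<notin> clo (set Qa)"
  proof -
    fix t assume t: "t \<in> clo (set ?M)"
    from clo_atom[OF t] obtain z where z: "z \<in> set ?M" "z \<in> sub t" by blast
    show "t \<notin> clo (set Qa)"
    proof (cases "z = ?pa")
      case True
      then have "hd Qb \<in> sub t" using sub_trans[OF hb_pa(1), of t] z True by simp
      then show ?thesis using N1 by blast
    next
      case False
      then have "z \<in> set Qm" using z by simp
      then show ?thesis using suppA[of z t] ss d(4) z by blast
    qed
  qed
  have MB: "\<And>t. t \<in> clo (set ?M) \<Longrightarrow> t \<notin> clo (set Qb)"
  proof -
    fix t assume t: "t \<in> clo (set ?M)"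
    from clo_atom[OF t] obtain z where z: "z \<in> set ?M" "z \<in> sub t" by blast
    show "t \<notin> clo (set Qb)"
    proof (cases "z = ?pa")
      case True
      then have "hd Qa \<in> sub t" using sub_trans[OF ha_pa(1), of t] z True by simp
      then show ?thesis using N2 by blast
    next
      case False
      then have "z \<in> set Qm" using z by simp
      then show ?thesis using suppB[of z t] ss d(5) z by blast
    qed
  qed
  have xM: "?x \<notin> clo (set ?M)"
  proof
    assume "?x \<in> clo (set ?M)"
    from clo_atom[OF this] obtain z where z: "z \<in> set ?M" "z \<in> sub ?x" by blast
    show False
    proof (cases "z = ?pa")
      case True
      have n1: "xa \<noteq> xb"
      proof
        assume "xa = xb"
        then have "xb \<notin> clo (set Qb)" using N2[OF pa(3)] by simp
        then show False using pb(2) by simp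
      qed
      have n2: "?pa \<notin> sub xb"
      proof
        assume "?pa \<in> sub xb"
        then have "hd Qa \<in> sub xb" by (rule sub_trans[OF ha_pa(1)])
        then show False using N2 pb(2) by blast
      qed
      have n3: "?pa \<notin> sub xa" by (rule Pr_not_sub_left)
      have "?pa \<in> sub ?x" using z True by simp
      then show False using n1 n2 n3 by simp
    next
      case False
      then have zQ: "z \<in> set Qm" using z by simp
      have "z = ?x \<or> z \<in> sub xb \<or> z \<in> sub xa" using z by simp
      then show False
      proof (elim disjE)
        assume "z = ?x"
        then have "hd Qa = z" using gen_sub[OF g ha(2) _ ha_pa(2)] zQ ss by auto
        then show False using zQ ha d(4) by auto
      next
        assume "z \<in> sub xb" then show False using suppB[OF _ _ pb(2), of z] zQ ss d(5) by auto
      next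
        assume "z \<in> sub xa" then show False using suppA[OF _ _ pa(2), of z] zQ ss d(4) by auto
      qed
    qed
  qed
  have e1: "Sa = S \<inter> clo (set Qa)"
  proof
    show "Sa \<subseteq> S \<inter> clo (set Qa)" using S pa(4) by auto
  next
    show "S \<inter> clo (set Qa) \<subseteq> Sa"
    proof
      fix t assume t: "t \<in> S \<inter> clo (set Qa)"
      have "t \<noteq> ?pa" "t \<noteq> ?x" using t N1 hb_pa by blast+
      moreover have "t \<notin> Sb" using t AB pb(4) by blast
      moreover have "t \<notin> Sm" using t MA Smc by blast
      ultimately show "t \<in> Sa" using t S by blast
    qed
  qed
  have e2: "Sb = S \<inter> clo (set Qb)"
  proof
    show "Sb \<subseteq> S \<inter> clo (set Qb)" using S pb(4) by auto
  next
    show "S \<inter> clo (set Qb) \<subseteq> Sb"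
    proof
      fix t assume t: "t \<in> S \<inter> clo (set Qb)"
      have "t \<noteq> ?pa" "t \<noteq> ?x" using t N2 ha_pa by blast+
      moreover have "t \<notin> Sa" using t AB pa(4) by blast
      moreover have "t \<notin> Sm" using t MB Smc by blast
      ultimately show "t \<in> Sb" using t S by blast
    qed
  qed
  have e3: "Sm = S \<inter> clo (set ?M) - {?pa}"
  proof
    show "Sm \<subseteq> S \<inter> clo (set ?M) - {?pa}" using S Smc pSm by auto
  next
    show "S \<inter> clo (set ?M) - {?pa} \<subseteq> Sm"
    proof
      fix t assume t: "t \<in> S \<inter> clo (set ?M) - {?pa}"
      have "t \<noteq> ?x" using t xM by blast
      moreover have "t \<notin> Sa" using t MA pa(4) by blast
      moreover have "t \<notin> Sb" using t MB pb(4) by blast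
      ultimately show "t \<in> Sm" using t S by blast
    qed
  qed
  show ?thesis using gA gB gM e1 e2 e3 by blast
qed

lemma region_gen:
  assumes g: "gen (r0 # Q)" and Q: "Q = Q1 @ Qx @ Q2" and it: "itm Qx x Sx"
  shows "gen Qx \<and> gen (Q1 @ [Pr r0 x]) \<and> gen (Q2 @ [Pr x r0])"
proof -
  have ip: "x \<in> clo (set Qx)" using itm_props[OF it] by auto
  interpret ctx r0 Q Qx x
    by unfold_locales (use g Q ip in auto)
  have dQ: "distinct Q" using g unfolding gen_def by simp
  hence d: "distinct Q1" "distinct Qx" "distinct Q2" "set Q1 \<inter> set Qx = {}" "set Q2 \<inter> set Qx = {}"
    using Q by auto
  have ss: "set Q1 \<subseteq> set Q" "set Q2 \<subseteq> set Q" "set Qx \<subseteq> set Q" using Q by auto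
  have gQx: "gen Qx" using gen_sublist[OF g d(2)] ss by auto
  have ep: "Pr r0 x = Pr r0 x \<or> Pr r0 x = Pr x r0" and eq: "Pr x r0 = Pr r0 x \<or> Pr x r0 = Pr x r0" by simp_all
  show ?thesis using gQx gen_side[OF ss(1) d(4) d(1) ep] gen_side[OF ss(2) d(5) d(3) eq] by blast
qed

lemma item_gen:
  assumes g: "gen Q" and Q: "Q = Qa @ Qm @ Qb" and ia: "itm Qa xa Sa" and ib: "itm Qb xb Sb"
  shows "gen Qa \<and> gen Qb \<and> gen (Qm @ [Pr xa xb])"
proof -
  have "fin [Pr xa xb] {}" by (rule fin0) simp
  have pa: "Qa \<noteq> []" "xa \<in> clo (set Qa)" "hd Qa \<in> sub xa"
    using itm_props[OF ia] by auto
  have pb: "Qb \<noteq> []" "xb \<in> clo (set Qb)" "hd Qb \<in> sub xb"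
    using itm_props[OF ib] by auto
  have dQ: "distinct Q" using g unfolding gen_def by simp
  hence d: "distinct Qa" "distinct Qm" "distinct Qb" "set Qa \<inter> set Qm = {}" "set Qb \<inter> set Qm = {}"
    "set Qa \<inter> set Qb = {}" using Q by auto
  have ss: "set Qa \<subseteq> set Q" "set Qm \<subseteq> set Q" "set Qb \<subseteq> set Q" using Q by auto
  have ha: "hd Qa \<in> set Qa" "hd Qa \<in> set Q" using pa(1) ss by auto
  have suppA: "\<And>u t. u \<in> set Q \<Longrightarrow> u \<notin> set Qa \<Longrightarrow> t \<in> clo (set Qa) \<Longrightarrow> u \<notin> sub t"
    using supp[OF g ss(1)] by blast
  have suppB: "\<And>u t. u \<in> set Q \<Longrightarrow> u \<notin> set Qb \<Longrightarrow> t \<in> clo (set Qb) \<Longrightarrow> u \<notin> sub t"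
    using supp[OF g ss(3)] by blast
  let ?pa = "Pr xa xb"
  have ha_pa: "hd Qa \<in> sub ?pa" using sub_trans[OF pa(3) sub_Pr_left] .
  have paQm: "?pa \<notin> set Qm"
  proof
    assume "?pa \<in> set Qm"
    hence "hd Qa = ?pa" using gen_sub[OF g ha(2) _ ha_pa] ss by auto
    then show False using \<open>?pa \<in> set Qm\<close> ha d(4) by auto
  qed
  have gM: "gen (Qm @ [?pa])" unfolding gen_def
  proof (intro conjI ballI impI)
    show "distinct (Qm @ [?pa])" using d(2) paQm by simp
  next
    fix u v assume u: "u \<in> set (Qm @ [?pa])" and v: "v \<in> set (Qm @ [?pa])" and uv: "u \<in> sub v"
    show "u = v"
    proof (cases "u = ?pa")
      case True
      show ?thesis
      proof (cases "v = ?pa")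
        case False
        then have "v \<in> set Qm" using v by simp
        moreover have "hd Qa \<in> sub v" using sub_trans[OF ha_pa, of v] True uv by simp
        ultimately have "hd Qa = v" using gen_sub[OF g ha(2)] ss by auto
        then show ?thesis using \<open>v \<in> set Qm\<close> ha d(4) by auto
      qed (simp add: True)
    next
      case False
      then have uQ: "u \<in> set Qm" using u by simp
      show ?thesis
      proof (cases "v = ?pa")
        case True
        then have "u \<in> sub xa \<or> u \<in> sub xb" using uv False by simp
        then show ?thesis
        proof
          assume "u \<in> sub xa" then show ?thesis using suppA[OF _ _ pa(2), of u] uQ ss d(4) by auto
        next
          assume "u \<in> sub xb" then show ?thesis using suppB[OF _ _ pb(2), of u] uQ ss d(5) by auto
        qed
      next
        case False
        then have "v \<in> set Qm" using v by simp
        then show ?thesis using gen_sub[OF g _ _ uv] uQ ss by auto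
      qed
    qed
  qed
  show ?thesis using gM gen_sublist[OF g d(1) ss(1)] gen_sublist[OF g d(3) ss(3)] by blast
qed

lemma take_drop3: "take k xs @ take l (drop k xs) @ drop (k + l) xs = xs"
proof -
  have "take l (drop k xs) @ drop l (drop k xs) = drop k xs" by (rule append_take_drop_id)
  then show ?thesis by (simp add: add.commute)
qed

lemma nth_in_take_drop:
  assumes d: "distinct xs" and i: "i < length xs" and m: "xs!i \<in> set (take l (drop k xs))"
  shows "k \<le> i \<and> i < k + l"
proof -
  from m obtain j where j: "j < length (take l (drop k xs))" "(take l (drop k xs))!j = xs!i"
    by (auto simp: in_set_conv_nth)
  have jl: "j < l" "k + j < length xs" using j(1) by auto
  have "xs!(k+j) = xs!i" using j jl by simp
  hence "k + j = i" using nth_eq_iff_index_eq[OF d jl(2) i] by simp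
  then show ?thesis using jl by simp
qed

lemma supp_in: "gen R \<Longrightarrow> set W \<subseteq> set R \<Longrightarrow> u \<in> set R \<Longrightarrow> t \<in> clo (set W) \<Longrightarrow> u \<in> sub t \<Longrightarrow> u \<in> set W"
  using supp by blast

lemma hd_take_drop: "a < length Q \<Longrightarrow> hd (take (Suc b) (drop a Q)) = Q!a"
  by (simp add: hd_conv_nth)

lemma last_take_drop: "a + b < length Q \<Longrightarrow> last (take (Suc b) (drop a Q)) = Q!(a+b)"
proof -
  assume h: "a + b < length Q"
  have l: "length (take (Suc b) (drop a Q)) = Suc b" using h by simp
  have "last (take (Suc b) (drop a Q)) = (take (Suc b) (drop a Q)) ! b"
    using l by (simp add: last_conv_nth)
  also have "\<dots> = Q!(a+b)" using h by simp
  finally show ?thesis .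
qed

definition FIN :: "lbl list \<Rightarrow> lbl set set" where "FIN R = {A. fin R A}"
definition ITM :: "lbl list \<Rightarrow> (lbl \<times> lbl set) set" where "ITM Q = {(x, S). itm Q x S}"

lemma card_pos_finite: "card A = k \<Longrightarrow> k > 0 \<Longrightarrow> finite A"
  using card_ge_0_finite by blast

lemma card_Sigma_k:
  assumes "finite A" and "\<And>a. a \<in> A \<Longrightarrow> card (B a) = k a \<and> k a > 0"
  shows "card (Sigma A B) = (\<Sum>a\<in>A. k a)"
proof -
  have f: "\<forall>a\<in>A. finite (B a)" using assms(2) card_pos_finite by blast
  have "card (Sigma A B) = (\<Sum>a\<in>A. card (B a))" using card_SigmaI[OF assms(1) f] .
  also have "\<dots> = (\<Sum>a\<in>A. k a)" using assms(2) by (intro sum.cong) auto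
  finally show ?thesis .
qed

lemma FIN_one: "length R = 1 \<Longrightarrow> FIN R = {{}}"
  unfolding FIN_def using fin_small fin0 by fastforce

lemma ITM_one: "length Q = 1 \<Longrightarrow> ITM Q = {(hd Q, {})}"
proof -
  assume l: "length Q = 1"
  then obtain z where z: "Q = [z]" by (cases Q) auto
  have "itm Q x S \<longleftrightarrow> x = z \<and> S = {}" for x S
    using itm_len[of Q x S] l z itm.itl[of z] by auto
  then show ?thesis unfolding ITM_def using z by auto
qed

lemma region_step:
  assumes IHf: "\<And>m' R'. m' \<le> m0 \<Longrightarrow> gen R' \<Longrightarrow> length R' = Suc m' \<Longrightarrow> card (FIN R') = tt m'"
    and IHi: "\<And>m' Q'. m' \<le> m0 \<Longrightarrow> gen Q' \<Longrightarrow> length Q' = Suc m' \<Longrightarrow> card (ITM Q') = tt m'"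
    and g: "gen (r0 # Q)" and lQ: "length Q = Suc m0"
  shows "card (FIN (r0 # Q)) = tt (Suc m0)"
proof -
  define Q1 where "Q1 a = take a Q" for a
  define Qx where "Qx a b = take (Suc b) (drop a Q)" for a b
  define Q2 where "Q2 a b = drop (a + Suc b) Q" for a b
  define X where "X a x = Q1 a @ [Pr r0 x]" for a x
  define Y where "Y a b x = Q2 a b @ [Pr x r0]" for a b x
  define D where "D = (SIGMA a:{0..m0}. SIGMA b:{0..m0-a}. SIGMA xs:ITM (Qx a b).
                        FIN (X a (fst xs)) \<times> FIN (Y a b (fst xs)))"
  define enc :: "nat \<times> nat \<times> (lbl \<times> lbl set) \<times> lbl set \<times> lbl set \<Rightarrow> lbl set" where
    "enc = (\<lambda>(a, b, (x, Sx), (A1, A2)). {Pr r0 x, Pr x r0} \<union> Sx \<union> A1 \<union> A2)"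
  have split: "Q = Q1 a @ Qx a b @ Q2 a b" for a b
    unfolding Q1_def Qx_def Q2_def using take_drop3[of a Q "Suc b"] by simp
  have len: "length (Q1 a) = a" "length (Qx a b) = Suc b" "length (Q2 a b) = m0 - a - b"
    if "a + b \<le> m0" for a b using that lQ unfolding Q1_def Qx_def Q2_def by auto
  have dQ: "distinct Q" using g unfolding gen_def by simp
  have sQx: "set (Qx a b) \<subseteq> set Q" for a b
    unfolding Qx_def by (meson set_drop_subset set_take_subset subset_trans)
  have dQx: "distinct (Qx a b)" for a b unfolding Qx_def using dQ by simp
  have memD: "(a, b, (x, Sx), (A1, A2)) \<in> D \<longleftrightarrow> a \<le> m0 \<and> b \<le> m0 - a \<and> itm (Qx a b) x Sx \<and>
      fin (X a x) A1 \<and> fin (Y a b x) A2" for a b x Sx A1 A2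
    unfolding D_def ITM_def FIN_def by auto
  have ctx: "gen (Qx a b) \<and> gen (X a x) \<and> gen (Y a b x)" if "itm (Qx a b) x Sx" for a b x Sx
    using region_gen[OF g split that] unfolding X_def Y_def by blast
  have img: "enc ` D = FIN (r0 # Q)"
  proof
    show "enc ` D \<subseteq> FIN (r0 # Q)"
    proof
      fix A assume "A \<in> enc ` D"
      then obtain a b x Sx A1 A2 where d: "(a, b, (x, Sx), (A1, A2)) \<in> D"
        and A: "A = enc (a, b, (x, Sx), (A1, A2))" by (auto simp: image_iff)
      from d have h: "itm (Qx a b) x Sx" "fin (X a x) A1" "fin (Y a b x) A2" unfolding memD by auto
      have "cfin (r0 # Q) A"
        by (rule cfinI[OF _ h(1) h(2)[unfolded X_def] h(3)[unfolded Y_def]])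
           (use A split enc_def in auto)
      then show "A \<in> FIN (r0 # Q)" unfolding FIN_def using cfin_fin by blast
    qed
  next
    show "FIN (r0 # Q) \<subseteq> enc ` D"
    proof
      fix A assume "A \<in> FIN (r0 # Q)"
      then have "cfin (r0 # Q) A" unfolding FIN_def using fin_cfin by blast
      moreover have "\<not> length (r0 # Q) \<le> 1" using lQ by simp
      ultimately obtain r0' Q1' Qx' Q2' x Sx A1 A2 where
        e: "r0 # Q = r0' # Q1' @ Qx' @ Q2'" and it: "itm Qx' x Sx"
        and f1: "fin (Q1' @ [Pr r0' x]) A1" and f2: "fin (Q2' @ [Pr x r0']) A2"
        and A: "A = {Pr r0' x, Pr x r0'} \<union> Sx \<union> A1 \<union> A2"
        unfolding cfin_def by blast
      have r0: "r0' = r0" and Qe: "Q = Q1' @ Qx' @ Q2'" using e by auto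
      have ne: "Qx' \<noteq> []" using itm_props[OF it] by simp
      define a where "a = length Q1'"
      define b where "b = length Qx' - 1"
      have lx: "length Qx' = Suc b" using ne unfolding b_def by (cases Qx') auto
      have ab: "a + b \<le> m0" using lQ Qe lx unfolding a_def by simp
      have e1: "Q1 a = Q1'" unfolding Q1_def a_def Qe by simp
      have e2: "Qx a b = Qx'" unfolding Qx_def a_def Qe using lx by simp
      have e3: "Q2 a b = Q2'" unfolding Q2_def a_def Qe using lx by simp
      have "(a, b, (x, Sx), (A1, A2)) \<in> D"
        unfolding memD X_def Y_def using e1 e2 e3 it f1 f2 r0 ab by simp
      moreover have "A = enc (a, b, (x, Sx), (A1, A2))" unfolding enc_def using A r0 by simp
      ultimately show "A \<in> enc ` D" by blast
    qed
  qed
  have inj: "inj_on enc D"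
  proof (rule inj_onI)
    fix d d' assume d: "d \<in> D" and d': "d' \<in> D" and ee: "enc d = enc d'"
    obtain a b x Sx A1 A2 where dd: "d = (a, b, (x, Sx), (A1, A2))" by (cases d) auto
    obtain a' b' x' Sx' A1' A2' where dd': "d' = (a', b', (x', Sx'), (A1', A2'))" by (cases d') auto
    from d have h: "a \<le> m0" "b \<le> m0 - a" "itm (Qx a b) x Sx" "fin (X a x) A1" "fin (Y a b x) A2"
      unfolding dd memD by auto
    from d' have h': "a' \<le> m0" "b' \<le> m0 - a'" "itm (Qx a' b') x' Sx'" "fin (X a' x') A1'" "fin (Y a' b' x') A2'"
      unfolding dd' memD by auto
    define S where "S = enc d"
    have S1: "S = {Pr r0 x, Pr x r0} \<union> Sx \<union> A1 \<union> A2" unfolding S_def dd enc_def by simp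
    have "S = enc d'" using ee S_def by simp
    hence S2: "S = {Pr r0 x', Pr x' r0} \<union> Sx' \<union> A1' \<union> A2'" unfolding dd' enc_def by simp
    note c1 = region_ctx[OF g split h(3) h(4)[unfolded X_def] h(5)[unfolded Y_def] S1]
    note c2 = region_ctx[OF g split h'(3) h'(4)[unfolded X_def] h'(5)[unfolded Y_def] S2]
    have k1: "\<forall>y. Pr r0 y \<in> S \<longrightarrow> y = x" by (rule c1[THEN conjunct2, THEN conjunct2, THEN conjunct2, THEN conjunct1])
    have "Pr r0 x' \<in> S" using S2 by simp
    hence xx: "x' = x" using k1 by blast
    have ip: "x \<in> clo (set (Qx a b))" "hd (Qx a b) \<in> sub x" "last (Qx a b) \<in> sub x"
      using itm_props[OF h(3)] by auto
    have ip': "x \<in> clo (set (Qx a' b'))" "hd (Qx a' b') \<in> sub x" "last (Qx a' b') \<in> sub x"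
      using itm_props[OF h'(3)] xx by auto
    have lt: "a < length Q" "a + b < length Q" "a' < length Q" "a' + b' < length Q"
      using h h' lQ by auto
    have hd1: "hd (Qx a b) = Q!a" "last (Qx a b) = Q!(a+b)"
      unfolding Qx_def by (rule hd_take_drop[OF lt(1)], rule last_take_drop[OF lt(2)])
    have hd2: "hd (Qx a' b') = Q!a'" "last (Qx a' b') = Q!(a'+b')"
      unfolding Qx_def by (rule hd_take_drop[OF lt(3)], rule last_take_drop[OF lt(4)])
    have sQ: "set (Qx a b) \<subseteq> set (r0 # Q)" "set (Qx a' b') \<subseteq> set (r0 # Q)"
      using sQx by auto
    have inQ: "Q!i \<in> set (r0 # Q)" if "i < length Q" for i using that by simp
    have m1: "Q!a \<in> set (Qx a' b')" using supp_in[OF g sQ(2) inQ[OF lt(1)] ip'(1)] ip(2) hd1 by simp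
    have m2: "Q!a' \<in> set (Qx a b)" using supp_in[OF g sQ(1) inQ[OF lt(3)] ip(1)] ip'(2) hd2 by simp
    have m3: "Q!(a+b) \<in> set (Qx a' b')" using supp_in[OF g sQ(2) inQ[OF lt(2)] ip'(1)] ip(3) hd1 by simp
    have m4: "Q!(a'+b') \<in> set (Qx a b)" using supp_in[OF g sQ(1) inQ[OF lt(4)] ip(1)] ip'(3) hd2 by simp
    have i1: "a' \<le> a" using nth_in_take_drop[OF dQ lt(1) m1[unfolded Qx_def]] by simp
    have i2: "a \<le> a'" using nth_in_take_drop[OF dQ lt(3) m2[unfolded Qx_def]] by simp
    have aa: "a' = a" using i1 i2 by simp
    have i3: "a + b < a' + Suc b'" using nth_in_take_drop[OF dQ lt(2) m3[unfolded Qx_def]] by simp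
    have i4: "a' + b' < a + Suc b" using nth_in_take_drop[OF dQ lt(4) m4[unfolded Qx_def]] by simp
    have bb: "b' = b" using i3 i4 aa by simp
    have p1: "Sx = S \<inter> clo (set (Qx a b))" "A1 = S \<inter> clo (set (Q1 a @ [Pr r0 x])) - {Pr r0 x}"
      "A2 = S \<inter> clo (set (Q2 a b @ [Pr x r0])) - {Pr x r0}"
      by (rule c1[THEN conjunct2, THEN conjunct2, THEN conjunct2, THEN conjunct2,  THEN conjunct1], rule c1[THEN conjunct2, THEN conjunct2, THEN conjunct2, THEN conjunct2, THEN conjunct2,  THEN conjunct1], rule c1[THEN conjunct2, THEN conjunct2, THEN conjunct2, THEN conjunct2, THEN conjunct2, THEN conjunct2])
    have p2: "Sx' = S \<inter> clo (set (Qx a' b'))" "A1' = S \<inter> clo (set (Q1 a' @ [Pr r0 x'])) - {Pr r0 x'}"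
      "A2' = S \<inter> clo (set (Q2 a' b' @ [Pr x' r0])) - {Pr x' r0}"
      by (rule c2[THEN conjunct2, THEN conjunct2, THEN conjunct2, THEN conjunct2,  THEN conjunct1], rule c2[THEN conjunct2, THEN conjunct2, THEN conjunct2, THEN conjunct2, THEN conjunct2,  THEN conjunct1], rule c2[THEN conjunct2, THEN conjunct2, THEN conjunct2, THEN conjunct2, THEN conjunct2, THEN conjunct2])
    have "Sx' = Sx" unfolding p1(1) p2(1) aa bb ..
    moreover have "A1' = A1" unfolding p1(2) p2(2) aa xx ..
    moreover have "A2' = A2" unfolding p1(3) p2(3) aa bb xx ..
    ultimately show "d = d'" using dd dd' xx aa bb by simp
  qed
  have cD: "card D = (\<Sum>a=0..m0. \<Sum>b=0..m0-a. tt a * tt b * tt (m0-a-b))"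
    unfolding D_def
  proof (rule card_Sigma_k)
    fix a assume a: "a \<in> {0..m0}"
    have inner: "card (SIGMA b:{0..m0-a}. SIGMA xs:ITM (Qx a b). FIN (X a (fst xs)) \<times> FIN (Y a b (fst xs)))
          = (\<Sum>b=0..m0-a. tt a * tt b * tt (m0-a-b))"
    proof (rule card_Sigma_k)
      fix b assume b: "b \<in> {0..m0-a}"
      have ab: "a + b \<le> m0" using a b by auto
      have gx: "gen (Qx a b)" using gen_sublist[OF g dQx[of a b]] sQx[of a b] by auto
      have cI: "card (ITM (Qx a b)) = tt b" using IHi[OF _ gx len(2)[OF ab]] ab by simp
      have inn: "card (SIGMA xs:ITM (Qx a b). FIN (X a (fst xs)) \<times> FIN (Y a b (fst xs)))
            = (\<Sum>xs\<in>ITM (Qx a b). tt a * tt (m0-a-b))"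
      proof (rule card_Sigma_k)
        show "finite (ITM (Qx a b))" using card_pos_finite[OF cI tt_pos] .
      next
        fix xs assume xs: "xs \<in> ITM (Qx a b)"
        then have it: "itm (Qx a b) (fst xs) (snd xs)" unfolding ITM_def by auto
        have gg: "gen (X a (fst xs))" "gen (Y a b (fst xs))" using ctx[OF it] by auto
        have lX: "length (X a (fst xs)) = Suc a" unfolding X_def using len(1)[OF ab] by simp
        have lY: "length (Y a b (fst xs)) = Suc (m0-a-b)" unfolding Y_def using len(3)[OF ab] by simp
        have "card (FIN (X a (fst xs))) = tt a" using IHf[OF _ gg(1) lX] ab by simp
        moreover have "card (FIN (Y a b (fst xs))) = tt (m0-a-b)" using IHf[OF _ gg(2) lY] by simp
        ultimately show "card (FIN (X a (fst xs)) \<times> FIN (Y a b (fst xs))) = tt a * tt (m0-a-b) \<and>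
            tt a * tt (m0-a-b) > 0" using tt_pos by (simp add: card_cartesian_product)
      qed
      also have "\<dots> = tt a * tt b * tt (m0-a-b)" using cI by simp
      finally show "card (SIGMA xs:ITM (Qx a b). FIN (X a (fst xs)) \<times> FIN (Y a b (fst xs)))
          = tt a * tt b * tt (m0-a-b) \<and> tt a * tt b * tt (m0-a-b) > 0" using tt_pos by simp
    qed simp
    show "card (SIGMA b:{0..m0-a}. SIGMA xs:ITM (Qx a b). FIN (X a (fst xs)) \<times> FIN (Y a b (fst xs)))
          = (\<Sum>b=0..m0-a. tt a * tt b * tt (m0-a-b)) \<and> (\<Sum>b=0..m0-a. tt a * tt b * tt (m0-a-b)) > 0"
      using inner tt_pos by (simp add: sum_pos)
  qed simp
  have "card (FIN (r0 # Q)) = card (enc ` D)" using img by simp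
  also have "\<dots> = card D" using card_image[OF inj] .
  also have "\<dots> = tt (Suc m0)" using cD by simp
  finally show ?thesis .
qed

lemma nth_in_take:
  "distinct xs \<Longrightarrow> i < length xs \<Longrightarrow> xs!i \<in> set (take l xs) \<Longrightarrow> i < l"
  using nth_in_take_drop[of xs i l 0] by simp

lemma nth_in_drop:
  "distinct xs \<Longrightarrow> i < length xs \<Longrightarrow> xs!i \<in> set (drop k xs) \<Longrightarrow> k \<le> i"
  using nth_in_take_drop[of xs i "length xs" k] by simp

lemma item_step:
  assumes IHf: "\<And>m' R'. m' \<le> m0 \<Longrightarrow> gen R' \<Longrightarrow> length R' = Suc m' \<Longrightarrow> card (FIN R') = tt m'"
    and IHi: "\<And>m' Q'. m' \<le> m0 \<Longrightarrow> gen Q' \<Longrightarrow> length Q' = Suc m' \<Longrightarrow> card (ITM Q') = tt m'"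
    and g: "gen Q" and lQ: "length Q = Suc (Suc m0)"
  shows "card (ITM Q) = tt (Suc m0)"
proof -
  define Qa where "Qa a = take (Suc a) Q" for a
  define Qm where "Qm a b = take (m0 - a - b) (drop (Suc a) Q)" for a b
  define Qb where "Qb b = drop (Suc m0 - b) Q" for b
  define M where "M a b xa xb = Qm a b @ [Pr xa xb]" for a b xa xb
  define D where "D = (SIGMA a:{0..m0}. SIGMA b:{0..m0-a}. SIGMA p:(ITM (Qa a) \<times> ITM (Qb b)).
                        FIN (M a b (fst (fst p)) (fst (snd p))))"
  define enc :: "nat \<times> nat \<times> ((lbl \<times> lbl set) \<times> (lbl \<times> lbl set)) \<times> lbl set \<Rightarrow> lbl \<times> lbl set" where
    "enc = (\<lambda>(a, b, ((xa, Sa), (xb, Sb)), Sm). (Pr xb xa, {Pr xa xb, Pr xb xa} \<union> Sa \<union> Sb \<union> Sm))"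
  have split: "Q = Qa a @ Qm a b @ Qb b" if "a + b \<le> m0" for a b
  proof -
    have e: "Suc a + (m0 - a - b) = Suc m0 - b" using that by simp
    have "take (Suc a) Q @ take (m0 - a - b) (drop (Suc a) Q) @ drop (Suc a + (m0 - a - b)) Q = Q"
      by (rule take_drop3)
    from this[unfolded e] show ?thesis unfolding Qa_def Qm_def Qb_def by (rule sym)
  qed
  have len: "length (Qa a) = Suc a" "length (Qm a b) = m0 - a - b" "length (Qb b) = Suc b"
    if "a + b \<le> m0" for a b using that lQ unfolding Qa_def Qm_def Qb_def by auto
  have dQ: "distinct Q" using g unfolding gen_def by simp
  have gA: "gen (Qa a)" for a
    using gen_sublist[OF g] dQ unfolding Qa_def by (simp add: set_take_subset)
  have gB: "gen (Qb b)" for b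
    using gen_sublist[OF g] dQ unfolding Qb_def by (simp add: set_drop_subset)
  have memD: "(a, b, ((xa, Sa), (xb, Sb)), Sm) \<in> D \<longleftrightarrow> a \<le> m0 \<and> b \<le> m0 - a \<and> itm (Qa a) xa Sa \<and>
      itm (Qb b) xb Sb \<and> fin (M a b xa xb) Sm" for a b xa Sa xb Sb Sm
    unfolding D_def ITM_def FIN_def by auto
  have img: "enc ` D = ITM Q"
  proof
    show "enc ` D \<subseteq> ITM Q"
    proof
      fix p assume "p \<in> enc ` D"
      then obtain a b xa Sa xb Sb Sm where d: "(a, b, ((xa, Sa), (xb, Sb)), Sm) \<in> D"
        and p: "p = enc (a, b, ((xa, Sa), (xb, Sb)), Sm)" by (auto simp: image_iff)
      from d have h: "a + b \<le> m0" "itm (Qa a) xa Sa" "itm (Qb b) xb Sb" "fin (Qm a b @ [Pr xa xb]) Sm"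
        unfolding memD M_def by auto
      from itm.itn[OF h(2) h(3) h(4)] have "itm Q (Pr xb xa) ({Pr xa xb, Pr xb xa} \<union> Sa \<union> Sb \<union> Sm)"
        using split[OF h(1)] by simp
      then show "p \<in> ITM Q" unfolding ITM_def p enc_def by simp
    qed
  next
    show "ITM Q \<subseteq> enc ` D"
    proof
      fix p assume "p \<in> ITM Q"
      then obtain x S where p: "p = (x, S)" and it: "itm Q x S" unfolding ITM_def by auto
      from it show "p \<in> enc ` D"
      proof (cases rule: itm.cases)
        case itl then show ?thesis using lQ by simp
      next
        case (itn Qa' xa Sa Qb' xb Sb Qm' Sm)
        have ne: "Qa' \<noteq> []" "Qb' \<noteq> []" using itm_props[OF itn(4)] itm_props[OF itn(5)] by auto
        define a where "a = length Qa' - 1"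
        define b where "b = length Qb' - 1"
        have la: "length Qa' = Suc a" using ne unfolding a_def by (cases Qa') auto
        have lb: "length Qb' = Suc b" using ne unfolding b_def by (cases Qb') auto
        have lm: "length Qm' = m0 - a - b" and ab: "a + b \<le> m0" using lQ itn(1) la lb by auto
        have e1: "Qa a = Qa'" unfolding Qa_def itn(1) using la by simp
        have e2: "Qm a b = Qm'" unfolding Qm_def itn(1) using la lm by simp
        have "Suc m0 - b = length Qa' + length Qm'" using la lm ab by simp
        hence e3: "Qb b = Qb'" unfolding Qb_def itn(1) by simp
        have "(a, b, ((xa, Sa), (xb, Sb)), Sm) \<in> D"
          unfolding memD M_def using e1 e2 e3 itn ab by simp
        moreover have "p = enc (a, b, ((xa, Sa), (xb, Sb)), Sm)" unfolding enc_def using p itn by simp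
        ultimately show ?thesis by blast
      qed
    qed
  qed
  have inj: "inj_on enc D"
  proof (rule inj_onI)
    fix d d' assume d: "d \<in> D" and d': "d' \<in> D" and ee: "enc d = enc d'"
    obtain a b xa Sa xb Sb Sm where dd: "d = (a, b, ((xa, Sa), (xb, Sb)), Sm)" by (cases d) auto
    obtain a' b' xa' Sa' xb' Sb' Sm' where dd': "d' = (a', b', ((xa', Sa'), (xb', Sb')), Sm')" by (cases d') auto
    from d have h: "a + b \<le> m0" "itm (Qa a) xa Sa" "itm (Qb b) xb Sb" "fin (Qm a b @ [Pr xa xb]) Sm"
      unfolding dd memD M_def by auto
    from d' have h': "a' + b' \<le> m0" "itm (Qa a') xa' Sa'" "itm (Qb b') xb' Sb'" "fin (Qm a' b' @ [Pr xa' xb']) Sm'"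
      unfolding dd' memD M_def by auto
    define S where "S = snd (enc d)"
    have S1: "S = {Pr xa xb, Pr xb xa} \<union> Sa \<union> Sb \<union> Sm" unfolding S_def dd enc_def by simp
    have "S = snd (enc d')" using ee S_def by simp
    hence S2: "S = {Pr xa' xb', Pr xb' xa'} \<union> Sa' \<union> Sb' \<union> Sm'" unfolding dd' enc_def by simp
    have "fst (enc d) = fst (enc d')" using ee by simp
    hence xx: "xa' = xa" "xb' = xb" unfolding dd dd' enc_def by simp_all
    note c1 = item_ctx[OF g split[OF h(1)] h(2) h(3) h(4) S1]
    note c2 = item_ctx[OF g split[OF h'(1)] h'(2) h'(3) h'(4) S2]
    have ipa: "xa \<in> clo (set (Qa a))" "last (Qa a) \<in> sub xa" using itm_props[OF h(2)] by auto
    have ipa': "xa \<in> clo (set (Qa a'))" "last (Qa a') \<in> sub xa" using itm_props[OF h'(2)] xx by auto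
    have ipb: "xb \<in> clo (set (Qb b))" "hd (Qb b) \<in> sub xb" using itm_props[OF h(3)] by auto
    have ipb': "xb \<in> clo (set (Qb b'))" "hd (Qb b') \<in> sub xb" using itm_props[OF h'(3)] xx by auto
    have lt: "a < length Q" "a' < length Q" "Suc m0 - b < length Q" "Suc m0 - b' < length Q"
      using h h' lQ by auto
    have la1: "last (Qa a) = Q!a" unfolding Qa_def using last_take_drop[of 0 a Q] lt(1) by simp
    have la2: "last (Qa a') = Q!a'" unfolding Qa_def using last_take_drop[of 0 a' Q] lt(2) by simp
    note la = la1 la2
    have hb1: "hd (Qb b) = Q!(Suc m0 - b)" unfolding Qb_def using hd_drop_conv_nth[OF lt(3)] .
    have hb2: "hd (Qb b') = Q!(Suc m0 - b')" unfolding Qb_def using hd_drop_conv_nth[OF lt(4)] .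
    note hb = hb1 hb2
    have sA: "set (Qa a'') \<subseteq> set Q" for a'' unfolding Qa_def by (rule set_take_subset)
    have sB: "set (Qb b'') \<subseteq> set Q" for b'' unfolding Qb_def by (rule set_drop_subset)
    have inQ: "Q!i \<in> set Q" if "i < length Q" for i using that by simp
    have m1: "Q!a \<in> set (Qa a')" using supp_in[OF g sA inQ[OF lt(1)] ipa'(1)] ipa(2) la by simp
    have m2: "Q!a' \<in> set (Qa a)" using supp_in[OF g sA inQ[OF lt(2)] ipa(1)] ipa'(2) la by simp
    have m3: "Q!(Suc m0 - b) \<in> set (Qb b')" using supp_in[OF g sB inQ[OF lt(3)] ipb'(1)] ipb(2) hb by simp
    have m4: "Q!(Suc m0 - b') \<in> set (Qb b)" using supp_in[OF g sB inQ[OF lt(4)] ipb(1)] ipb'(2) hb by simp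
    have i1: "a < Suc a'" using nth_in_take[OF dQ lt(1) m1[unfolded Qa_def]] .
    have i2: "a' < Suc a" using nth_in_take[OF dQ lt(2) m2[unfolded Qa_def]] .
    have aa: "a' = a" using i1 i2 by simp
    have i3: "Suc m0 - b' \<le> Suc m0 - b" using nth_in_drop[OF dQ lt(3) m3[unfolded Qb_def]] .
    have i4: "Suc m0 - b \<le> Suc m0 - b'" using nth_in_drop[OF dQ lt(4) m4[unfolded Qb_def]] .
    have bb: "b' = b" using i3 i4 h h' by simp
    have p1: "Sa = S \<inter> clo (set (Qa a))" "Sb = S \<inter> clo (set (Qb b))"
      "Sm = S \<inter> clo (set (Qm a b @ [Pr xa xb])) - {Pr xa xb}"
      by (rule c1[THEN conjunct2, THEN conjunct2, THEN conjunct2, THEN conjunct1],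
          rule c1[THEN conjunct2, THEN conjunct2, THEN conjunct2, THEN conjunct2, THEN conjunct1],
          rule c1[THEN conjunct2, THEN conjunct2, THEN conjunct2, THEN conjunct2, THEN conjunct2])
    have p2: "Sa' = S \<inter> clo (set (Qa a'))" "Sb' = S \<inter> clo (set (Qb b'))"
      "Sm' = S \<inter> clo (set (Qm a' b' @ [Pr xa' xb'])) - {Pr xa' xb'}"
      by (rule c2[THEN conjunct2, THEN conjunct2, THEN conjunct2, THEN conjunct1],
          rule c2[THEN conjunct2, THEN conjunct2, THEN conjunct2, THEN conjunct2, THEN conjunct1],
          rule c2[THEN conjunct2, THEN conjunct2, THEN conjunct2, THEN conjunct2, THEN conjunct2])
    have "Sa' = Sa" unfolding p1(1) p2(1) aa ..
    moreover have "Sb' = Sb" unfolding p1(2) p2(2) bb ..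
    moreover have "Sm' = Sm" unfolding p1(3) p2(3) aa bb xx ..
    ultimately show "d = d'" using dd dd' xx aa bb by simp
  qed
  have cD: "card D = (\<Sum>a=0..m0. \<Sum>b=0..m0-a. tt a * tt b * tt (m0-a-b))"
    unfolding D_def
  proof (rule card_Sigma_k)
    fix a assume a: "a \<in> {0..m0}"
    have inner: "card (SIGMA b:{0..m0-a}. SIGMA p:(ITM (Qa a) \<times> ITM (Qb b)). FIN (M a b (fst (fst p)) (fst (snd p))))
          = (\<Sum>b=0..m0-a. tt a * tt b * tt (m0-a-b))"
    proof (rule card_Sigma_k)
      fix b assume b: "b \<in> {0..m0-a}"
      have ab: "a + b \<le> m0" using a b by auto
      have cA: "card (ITM (Qa a)) = tt a" using IHi[OF _ gA len(1)[OF ab]] ab by simp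
      have cB: "card (ITM (Qb b)) = tt b" using IHi[OF _ gB len(3)[OF ab]] ab by simp
      have cAB: "card (ITM (Qa a) \<times> ITM (Qb b)) = tt a * tt b" using cA cB by (simp add: card_cartesian_product)
      have inn: "card (SIGMA p:(ITM (Qa a) \<times> ITM (Qb b)). FIN (M a b (fst (fst p)) (fst (snd p))))
            = (\<Sum>p\<in>ITM (Qa a) \<times> ITM (Qb b). tt (m0-a-b))"
      proof (rule card_Sigma_k)
        show "finite (ITM (Qa a) \<times> ITM (Qb b))" using card_pos_finite[OF cAB] tt_pos by simp
      next
        fix p assume p: "p \<in> ITM (Qa a) \<times> ITM (Qb b)"
        then have i1: "itm (Qa a) (fst (fst p)) (snd (fst p))" and i2: "itm (Qb b) (fst (snd p)) (snd (snd p))"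
          unfolding ITM_def by auto
        have gM: "gen (M a b (fst (fst p)) (fst (snd p)))"
          using item_gen[OF g split[OF ab] i1 i2] unfolding M_def by blast
        have lM: "length (M a b (fst (fst p)) (fst (snd p))) = Suc (m0-a-b)" unfolding M_def using len(2)[OF ab] by simp
        show "card (FIN (M a b (fst (fst p)) (fst (snd p)))) = tt (m0-a-b) \<and> tt (m0-a-b) > 0"
          using IHf[OF _ gM lM] tt_pos by simp
      qed
      also have "\<dots> = tt a * tt b * tt (m0-a-b)" using cAB by simp
      finally show "card (SIGMA p:(ITM (Qa a) \<times> ITM (Qb b)). FIN (M a b (fst (fst p)) (fst (snd p))))
          = tt a * tt b * tt (m0-a-b) \<and> tt a * tt b * tt (m0-a-b) > 0" using tt_pos by simp
    qed simp
    show "card (SIGMA b:{0..m0-a}. SIGMA p:(ITM (Qa a) \<times> ITM (Qb b)). FIN (M a b (fst (fst p)) (fst (snd p))))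
          = (\<Sum>b=0..m0-a. tt a * tt b * tt (m0-a-b)) \<and> (\<Sum>b=0..m0-a. tt a * tt b * tt (m0-a-b)) > 0"
      using inner tt_pos by (simp add: sum_pos)
  qed simp
  have "card (ITM Q) = card (enc ` D)" using img by simp
  also have "\<dots> = card D" using card_image[OF inj] .
  also have "\<dots> = tt (Suc m0)" using cD by simp
  finally show ?thesis .
qed

lemma counts:
  "(\<forall>R. gen R \<longrightarrow> length R = Suc m \<longrightarrow> card (FIN R) = tt m) \<and>
   (\<forall>Q. gen Q \<longrightarrow> length Q = Suc m \<longrightarrow> card (ITM Q) = tt m)"
proof (induction m rule: less_induct)
  case (less m)
  show ?case
  proof (cases m)
    case 0
    have "card (FIN R) = tt m" if "length R = Suc m" for R using FIN_one[of R] that 0 by simp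
    moreover have "card (ITM Q) = tt m" if "length Q = Suc m" for Q using ITM_one[of Q] that 0 by simp
    ultimately show ?thesis by blast
  next
    case (Suc m0)
    have IHf: "card (FIN R') = tt m'" if "m' \<le> m0" "gen R'" "length R' = Suc m'" for m' R'
    proof -
      have "m' < m" using that(1) Suc by simp
      from conjunct1[OF less.IH[OF this]] show ?thesis using that(2,3) by blast
    qed
    have IHi: "card (ITM Q') = tt m'" if "m' \<le> m0" "gen Q'" "length Q' = Suc m'" for m' Q'
    proof -
      have "m' < m" using that(1) Suc by simp
      from conjunct2[OF less.IH[OF this]] show ?thesis using that(2,3) by blast
    qed
    have A: "card (FIN R) = tt m" if gR: "gen R" and lR: "length R = Suc m" for R
    proof (cases R)
      case Nil then show ?thesis using lR by simp
    next
      case (Cons r0 Q)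
      have lQ: "length Q = Suc m0" using lR Cons Suc by simp
      have gQ: "gen (r0 # Q)" using gR Cons by simp
      have "card (FIN (r0 # Q)) = tt (Suc m0)" by (rule region_step[OF IHf IHi gQ lQ])
      then show ?thesis using Cons Suc by simp
    qed
    have B: "card (ITM Q) = tt m" if gQ: "gen Q" and lQ: "length Q = Suc m" for Q
    proof -
      have lQ': "length Q = Suc (Suc m0)" using lQ Suc by simp
      have "card (ITM Q) = tt (Suc m0)" by (rule item_step[OF IHf IHi gQ lQ'])
      then show ?thesis using Suc by simp
    qed
    show ?thesis using A B by blast
  qed
qed

theorem theorem2:
  fixes n :: nat
  assumes "n \<ge> 1"
  shows "real (pbs_count n) = real ((3*n - 3) choose (n - 1)) / real (2*n - 1)"
proof -
  define R0 where "R0 = map Pt [1..<n+1]"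
  have d: "distinct R0" unfolding R0_def by (simp add: distinct_map inj_on_def)
  have s: "\<forall>u\<in>set R0. \<forall>v\<in>set R0. u \<in> sub v \<longrightarrow> u = v" unfolding R0_def by auto
  have g: "gen R0" using d s unfolding gen_def by blast
  have l: "length R0 = Suc (n - 1)" unfolding R0_def using assms by simp
  have c: "card (FIN R0) = tt (n - 1)" using conjunct1[OF counts[of "n - 1"]] g l by blast
  have "pbs_count n = tt (n - 1)" using count_fin[of n] c unfolding FIN_def R0_def by simp
  hence "real (pbs_count n) = real ((3*(n-1)) choose (n-1)) / real (2*(n-1)+1)"
    using tt_closed[of "n - 1"] by simp
  moreover have "3*(n-1) = 3*n - 3" "2*(n-1)+1 = 2*n - 1" using assms by auto
  ultimately show ?thesis by simp
qed

end
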